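(* Let $i\ge1$. Then $\tilde\Delta^{i-1}\circ F_i$ is the identity of $Prim({\cal H}_R)^{\otimes i}$, and $\tilde\Delta^{k}\circ F_i=0$ for every $k>i-1$. Moreover $F_i$ is injective, and the sum $\mathbb{Q}1+\sum_{i=1}^{\infty}Im(F_i)$ is direct.
   Context: A rooted tree is a finite connected and simply connected graph with a distinguished vertex (the root), edges oriented away from the root; its weight is its number of vertices. ${\cal H}_R$ is the commutative polynomial algebra over $\mathbb{Q}$ on the isomorphism classes of rooted trees; monomials are forests ($1$ is the empty forest), the weight of a forest is its total number of vertices. An admissible cut $C$ of a tree $t$ is a nonempty set of edges such that every path from the root to a vertex contains at most one edge of $C$; removing them gives a forest in which $R^C(t)$ is the tree containing the root and $P^C(t)$ the product of the others. ${\cal H}_R$ is a Hopf algebra with coproduct the algebra morphism $\Delta$ with $\Delta(t)=1\otimes t+t\otimes1+\sum_C P^C(t)\otimes R^C(t)$ on trees, unit $\eta$ and counit $\varepsilon$ ($\varepsilon(1)=1$, $\varepsilon(t)=0$ on trees). $\tilde\Delta(x):=\Delta(x)-1\otimes x-x\otimes1$; $Prim({\cal H}_R)=\ker\tilde\Delta$. Set $\tilde\Delta^0=Id-\eta\circ\varepsilon$, $\tilde\Delta^1=\tilde\Delta$, $\tilde\Delta^k=(\tilde\Delta^{k-1}\otimes Id)\circ\tilde\Delta$, a map ${\cal H}_R\to{\cal H}_R^{\otimes(k+1)}$. For forests $M,N$: $M\top N=0$ if $N=1$, and otherwise $M\top N=\frac{1}{weight(N)}\sum_v N_v$, where $v$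 runs over vertices of $N$ and $N_v$ is obtained from $N$ by attaching every tree of $M$ to $v$ (an edge from $v$ to each root of $M$); extended bilinearly. $p_i\top\cdots\top p_1:=(p_i\top\cdots\top p_2)\top p_1$. $F_i:Prim({\cal H}_R)^{\otimes i}\to{\cal H}_R$ is the linear map with $F_i(p_i\otimes\cdots\otimes p_1)=p_i\top\cdots\top p_1$. *)

theory Defs
  imports Complex_Main "HOL-Library.Multiset" "HOL-Library.Poly_Mapping"
begin

text \<open>Concrete (planar) rooted trees: a root with an ordered list of children.
  Vertices are addressed by positions (paths of child indices); the root is [].\<close>
datatype ltree = LNode "ltree list"

primrec children :: "ltree \<Rightarrow> ltree list" where
  "children (LNode ts) = ts"

text \<open>Isomorphism classes of rooted trees: unordered trees.\<close>
datatype tree = Node "tree multiset"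

fun iso :: "ltree \<Rightarrow> tree" where
  "iso (LNode ts) = Node (mset (map iso ts))"

definition rep :: "tree \<Rightarrow> ltree" where
  "rep t = (SOME l. iso l = t)"

type_synonym forest = "tree multiset"

primrec valid :: "ltree \<Rightarrow> nat list \<Rightarrow> bool" where
  "valid t [] = True"
| "valid t (i # p) = (i < length (children t) \<and> valid (children t ! i) p)"

definition pos :: "ltree \<Rightarrow> nat list set" where
  "pos t = {p. valid t p}"

primrec sub :: "ltree \<Rightarrow> nat list \<Rightarrow> ltree" where
  "sub t [] = t"
| "sub t (i # p) = sub (children t ! i) p"

primrec graft :: "ltree list \<Rightarrow> ltree \<Rightarrow> nat list \<Rightarrow> ltree" where
  "graft ms t [] = LNode (children t @ ms)"
| "graft ms t (i # p) = LNode ((children t)[i := graft ms (children t ! i) p])"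

text \<open>Removing the subtrees hanging below the cut edges C (an edge is identified
  with the position of its target vertex).\<close>
function prune :: "nat list set \<Rightarrow> ltree \<Rightarrow> ltree" where
  "prune C (LNode ts) = LNode (concat (map (\<lambda>(i, t).
      if [i] \<in> C then [] else [prune {p. i # p \<in> C} t]) (zip [0..<length ts] ts)))"
  by pat_completeness auto
termination
proof (relation "measure (size \<circ> snd)", goal_cases)
  case 1 then show ?case by simp
next
  case (2 C ts x i t)
  then have "t \<in> set ts" by (auto dest: set_zip_rightD)
  then show ?case by (simp add: less_Suc_eq_le size_list_estimation')
qed

text \<open>Admissible cuts: nonempty sets of edges such that every root-to-vertex path
  contains at most one of them.\<close>
definition adm_cuts :: "ltree \<Rightarrow> nat list set set" where
  "adm_cuts l = {C. C \<noteq> {} \<and> C \<subseteq> pos l - {[]} \<and>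
      (\<forall>p\<in>C. \<forall>q\<in>C. (\<exists>r. q = p @ r) \<longrightarrow> p = q)}"

definition PC :: "nat list set \<Rightarrow> ltree \<Rightarrow> forest" where
  "PC C l = image_mset (\<lambda>p. iso (sub l p)) (mset_set C)"

definition RC :: "nat list set \<Rightarrow> ltree \<Rightarrow> tree" where
  "RC C l = iso (prune C l)"

definition weight :: "forest \<Rightarrow> nat" where
  "weight N = (\<Sum>t\<in>#N. card (pos (rep t)))"

text \<open>H_R = Q-vector space with basis the forests (product = disjoint union);
  H_R^{\<otimes>n} = finitely supported functions on lists of n forests.\<close>
type_synonym H = "forest \<Rightarrow>\<^sub>0 rat"
type_synonym T = "forest list \<Rightarrow>\<^sub>0 rat"

definition smul :: "rat \<Rightarrow> ('a \<Rightarrow>\<^sub>0 rat) \<Rightarrow> ('a \<Rightarrow>\<^sub>0 rat)" where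
  "smul c x = Poly_Mapping.map ((*) c) x"

definition qspan :: "('a \<Rightarrow>\<^sub>0 rat) set \<Rightarrow> ('a \<Rightarrow>\<^sub>0 rat) set" where
  "qspan S = {x. \<exists>(n::nat) (c::nat \<Rightarrow> rat) v. x = (\<Sum>j<n. smul (c j) (v j)) \<and> (\<forall>j<n. v j \<in> S)}"

definition embed :: "H \<Rightarrow> T" where
  "embed x = (\<Sum>F\<in>Poly_Mapping.keys x. Poly_Mapping.single [F] (Poly_Mapping.lookup x F))"

definition tens :: "T \<Rightarrow> T \<Rightarrow> T" where
  "tens x y = (\<Sum>u\<in>Poly_Mapping.keys x. \<Sum>v\<in>Poly_Mapping.keys y. Poly_Mapping.single (u @ v) (Poly_Mapping.lookup x u * Poly_Mapping.lookup y v))"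

definition tmult :: "T \<Rightarrow> T \<Rightarrow> T" where
  "tmult x y = (\<Sum>u\<in>Poly_Mapping.keys x. \<Sum>v\<in>Poly_Mapping.keys y.
      Poly_Mapping.single (map2 (+) u v) (Poly_Mapping.lookup x u * Poly_Mapping.lookup y v))"

definition unitH :: H where "unitH = Poly_Mapping.single {#} 1"
definition eta :: "rat \<Rightarrow> H" where "eta c = Poly_Mapping.single {#} c"
definition eps :: "H \<Rightarrow> rat" where "eps x = Poly_Mapping.lookup x {#}"

definition cop_tree :: "tree \<Rightarrow> T" where
  "cop_tree t = Poly_Mapping.single [{#}, {#t#}] 1 + Poly_Mapping.single [{#t#}, {#}] 1 +
     (\<Sum>C\<in>adm_cuts (rep t). Poly_Mapping.single [PC C (rep t), {#RC C (rep t)#}] 1)"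

text \<open>Delta is an algebra morphism: on a forest it is the product of the coproducts of its trees.\<close>
definition cop_forest :: "forest \<Rightarrow> T" where
  "cop_forest F = foldr (\<lambda>t acc. tmult (cop_tree t) acc) (SOME xs. mset xs = F)
      (Poly_Mapping.single [{#}, {#}] 1)"

definition cop :: "H \<Rightarrow> T" where
  "cop x = (\<Sum>F\<in>Poly_Mapping.keys x. smul (Poly_Mapping.lookup x F) (cop_forest F))"

definition rcop :: "H \<Rightarrow> T" where
  "rcop x = cop x - tens (embed unitH) (embed x) - tens (embed x) (embed unitH)"

definition Prim :: "H set" where
  "Prim = {x. rcop x = 0}"

definition apply_first :: "(H \<Rightarrow> T) \<Rightarrow> T \<Rightarrow> T" where
  "apply_first g w = (\<Sum>L\<in>Poly_Mapping.keys w. smul (Poly_Mapping.lookup w L)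
      (tens (g (Poly_Mapping.single (hd L) 1)) (Poly_Mapping.single (tl L) 1)))"

text \<open>iterated reduced coproduct \<tilde>\<Delta>^k : H \<rightarrow> H^{\<otimes>(k+1)}\<close>
fun rcop_it :: "nat \<Rightarrow> H \<Rightarrow> T" where
  "rcop_it 0 x = embed (x - eta (eps x))"
| "rcop_it (Suc 0) x = rcop x"
| "rcop_it (Suc (Suc k)) x = apply_first (rcop_it (Suc k)) (rcop x)"

definition flist :: "forest \<Rightarrow> tree list" where
  "flist F = (SOME xs. mset xs = F)"

definition topb :: "forest \<Rightarrow> forest \<Rightarrow> H" where
  "topb M N = (if N = {#} then 0 else
     smul (1 / of_nat (weight N))
       (\<Sum>(j, p)\<in>{(j, p). j < length (flist N) \<and> p \<in> pos (rep (flist N ! j))}.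
          Poly_Mapping.single
            (mset ((flist N)[j := iso (graft (map rep (flist M)) (rep (flist N ! j)) p)])) 1))"

definition top :: "H \<Rightarrow> H \<Rightarrow> H" where
  "top x y = (\<Sum>M\<in>Poly_Mapping.keys x. \<Sum>N\<in>Poly_Mapping.keys y. smul (Poly_Mapping.lookup x M * Poly_Mapping.lookup y N) (topb M N))"

text \<open>itop [p_i, ..., p_1] = p_i \<top> ... \<top> p_1 = (p_i \<top> ... \<top> p_2) \<top> p_1\<close>
fun itop :: "H list \<Rightarrow> H" where
  "itop [] = 0"
| "itop (a # as) = foldl top a as"

text \<open>linear extension to H^{\<otimes>i} of (x_i,...,x_1) \<mapsto> x_i \<top> ... \<top> x_1; its
  restriction to Prim^{\<otimes>i} is F_i\<close>
definition Fmap :: "nat \<Rightarrow> T \<Rightarrow> H" where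
  "Fmap i w = (\<Sum>L\<in>Poly_Mapping.keys w. if length L = i
      then smul (Poly_Mapping.lookup w L) (itop (map (\<lambda>F. Poly_Mapping.single F 1) L)) else 0)"

fun tensor_list :: "H list \<Rightarrow> T" where
  "tensor_list [] = Poly_Mapping.single [] 1"
| "tensor_list (x # xs) = tens (embed x) (tensor_list xs)"

definition primT :: "nat \<Rightarrow> T set" where
  "primT i = qspan {tensor_list ps | ps. length ps = i \<and> set ps \<subseteq> Prim}"

end

theory Submission
  imports Defs "HOL-Library.Product_Plus"
begin

lemma lookup_smul [simp]: "Poly_Mapping.lookup (smul c x) k = c * Poly_Mapping.lookup x k"
  unfolding smul_def by transfer (simp add: when_def)

lemma smul_add: "smul c (x + y) = smul c x + smul c y"
  by (rule poly_mapping_eqI) (simp add: lookup_add algebra_simps)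
lemma smul_add_left: "smul (c + d) x = smul c x + smul d x"
  by (rule poly_mapping_eqI) (simp add: lookup_add algebra_simps)
lemma smul_diff: "smul c (x - y) = smul c x - smul c y"
  by (rule poly_mapping_eqI) (simp add: lookup_minus algebra_simps)
lemma smul_minus: "smul c (- y) = - smul c y"
  by (rule poly_mapping_eqI) (simp add: algebra_simps)
lemma smul_zero [simp]: "smul c 0 = 0"
  by (rule poly_mapping_eqI) simp
lemma smul_zero_left [simp]: "smul 0 x = 0"
  by (rule poly_mapping_eqI) simp
lemma smul_one [simp]: "smul 1 x = x"
  by (rule poly_mapping_eqI) simp
lemma smul_smul [simp]: "smul c (smul d x) = smul (c * d) x"
  by (rule poly_mapping_eqI) simp
lemma smul_single [simp]: "smul c (Poly_Mapping.single k a) = Poly_Mapping.single k (c * a)"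
  by (rule poly_mapping_eqI) (simp add: lookup_single when_def)
lemma smul_sum: "smul c (sum f A) = (\<Sum>a\<in>A. smul c (f a))"
  by (induction A rule: infinite_finite_induct) (auto simp: smul_add)

definition lin :: "('a \<Rightarrow> ('b \<Rightarrow>\<^sub>0 rat)) \<Rightarrow> ('a \<Rightarrow>\<^sub>0 rat) \<Rightarrow> ('b \<Rightarrow>\<^sub>0 rat)" where
  "lin f x = (\<Sum>k\<in>Poly_Mapping.keys x. smul (Poly_Mapping.lookup x k) (f k))"

lemma lin_zero [simp]: "lin f 0 = 0"
  by (simp add: lin_def)

lemma lin_single [simp]: "lin f (Poly_Mapping.single k c) = smul c (f k)"
  by (simp add: lin_def)

lemma lin_smul: "lin f (smul c x) = smul c (lin f x)"
proof (cases "c = 0")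
  case True then show ?thesis by (simp add: lin_def)
next
  case False
  have "Poly_Mapping.keys (smul c x) = Poly_Mapping.keys x"
    using False by (auto simp: in_keys_iff)
  then show ?thesis using False by (simp add: lin_def smul_sum)
qed

lemma lin_add: "lin f (a + b) = lin f a + lin f b"
proof -
  have *: "(\<Sum>i\<in>Poly_Mapping.keys a. smul (Poly_Mapping.lookup a i) (f i))
         = (\<Sum>i\<in>Poly_Mapping.keys a \<union> Poly_Mapping.keys b. smul (Poly_Mapping.lookup a i) (f i))"
          "(\<Sum>i\<in>Poly_Mapping.keys b. smul (Poly_Mapping.lookup b i) (f i))
         = (\<Sum>i\<in>Poly_Mapping.keys a \<union> Poly_Mapping.keys b. smul (Poly_Mapping.lookup b i) (f i))"
    by (auto simp: in_keys_iff intro: sum.mono_neutral_cong_left)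
  have "lin f (a+b) = (\<Sum>i\<in>Poly_Mapping.keys (a + b).
       smul (Poly_Mapping.lookup a i) (f i) + smul (Poly_Mapping.lookup b i) (f i)) "
    by (auto simp: lin_def Poly_Mapping.lookup_add smul_add_left)
  also have "... = (\<Sum>i \<in> Poly_Mapping.keys a \<union> Poly_Mapping.keys b. smul (Poly_Mapping.lookup a i) (f i)
                         + smul (Poly_Mapping.lookup b i) (f i))"
  proof (rule sum.mono_neutral_cong_left)
    show "\<forall>i\<in>Poly_Mapping.keys a \<union> Poly_Mapping.keys b - Poly_Mapping.keys (a + b).
       smul (Poly_Mapping.lookup a i) (f i) + smul (Poly_Mapping.lookup b i) (f i) = 0"
      by (metis DiffD2 smul_add_left smul_zero_left in_keys_iff lookup_add)
  qed (auto simp: keys_add)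
  also have "... = (lin f a) + (lin f b)"
    by (auto simp: * sum.distrib lin_def)
  finally show ?thesis .
qed

lemma lin_minus: "lin f (- a) = - lin f a"
  using lin_smul[of f "-1" a] 
  by (metis add_eq_0_iff lin_add lin_zero)

lemma lin_diff: "lin f (a - b) = lin f a - lin f b"
  by (metis diff_conv_add_uminus lin_add lin_minus)

lemma lin_sum: "lin f (sum g A) = (\<Sum>a\<in>A. lin f (g a))"
  by (induction A rule: infinite_finite_induct) (auto simp: lin_add)

lemma lin_cong: "(\<And>k. k \<in> Poly_Mapping.keys x \<Longrightarrow> f k = g k) \<Longrightarrow> lin f x = lin g x"
  by (simp add: lin_def)

lemma expansion: "(x::'a \<Rightarrow>\<^sub>0 rat) = lin (\<lambda>k. Poly_Mapping.single k 1) x"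
proof -
  have *: "finite I
        \<Longrightarrow> Poly_Mapping.lookup (\<Sum>i\<in>I. Poly_Mapping.single i (Poly_Mapping.lookup x i)) j =
            (if j \<in> I then Poly_Mapping.lookup x j else 0)" for I j
    by (induction I rule: finite_induct) (auto simp: lookup_single lookup_add when_def)
  show ?thesis
    unfolding lin_def
    by (rule poly_mapping_eqI) (fastforce simp add: in_keys_iff *)
qed

lemma lin_induct [case_names zero add single]:
  fixes x :: "'a \<Rightarrow>\<^sub>0 rat"
  assumes "P 0" "\<And>a b. P a \<Longrightarrow> P b \<Longrightarrow> P (a + b)" "\<And>k c. P (Poly_Mapping.single k c)"
  shows "P x"
proof -
  have "P (\<Sum>i\<in>I. Poly_Mapping.single i (Poly_Mapping.lookup x i))" if "finite I" for I
    using that by (induction I rule: finite_induct) (auto intro: assms)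
  then show ?thesis by (subst expansion) (simp add: lin_def)
qed

lemma lin_eqI:
  assumes "\<And>k. lin f (Poly_Mapping.single k 1) = lin g (Poly_Mapping.single k 1)"
  shows "lin f x = lin g x"
  using assms by (induction x rule: lin_induct) (auto simp: lin_add)

lemma lin_lin: "lin g (lin f x) = lin (\<lambda>k. lin g (f k)) x"
  by (induction x rule: lin_induct) (auto simp: lin_add lin_smul)

lemma lin_id [simp]: "lin (\<lambda>k. Poly_Mapping.single k 1) x = x"
  using expansion[of x] by simp

lemma lin_plus_fun: "lin (\<lambda>k. f k + g k) x = lin f x + lin g x"
  by (induction x rule: lin_induct) (auto simp: lin_add smul_add)

lemma lin_zero_fun [simp]: "lin (\<lambda>k. 0) x = 0"
  by (induction x rule: lin_induct) (auto simp: lin_add)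

lemma lin_smul_fun: "lin (\<lambda>k. smul c (f k)) x = smul c (lin f x)"
  by (induction x rule: lin_induct) (auto simp: lin_add smul_add mult.commute)

lemma lin_sum_fun: "lin (\<lambda>k. \<Sum>a\<in>A. f a k) x = (\<Sum>a\<in>A. lin (f a) x)"
  by (induction A rule: infinite_finite_induct) (auto simp: lin_plus_fun)

lemma lin_diff_fun: "lin (\<lambda>k. f k - g k) x = lin f x - lin g x"
  by (induction x rule: lin_induct) (auto simp: lin_add smul_diff)


type_synonym H2 = "(forest \<times> forest) \<Rightarrow>\<^sub>0 rat"

definition tensor2 :: "H \<Rightarrow> H \<Rightarrow> H2" where
  "tensor2 x y = lin (\<lambda>a. lin (\<lambda>b. Poly_Mapping.single (a, b) 1) y) x"

definition Bp :: "H \<Rightarrow> H" where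
  "Bp = lin (\<lambda>F. Poly_Mapping.single {#Node F#} 1)"

definition idBp :: "H2 \<Rightarrow> H2" where
  "idBp = lin (\<lambda>(A, B). Poly_Mapping.single (A, {#Node B#}) 1)"

primrec Dt :: "tree \<Rightarrow> H2" where
  "Dt (Node F) = Poly_Mapping.single ({#Node F#}, {#}) 1 + idBp (prod_mset (image_mset Dt F))"

definition DF :: "forest \<Rightarrow> H2" where
  "DF F = prod_mset (image_mset Dt F)"

definition Dh :: "H \<Rightarrow> H2" where
  "Dh = lin DF"

primrec gt :: "forest \<Rightarrow> tree \<Rightarrow> H" where
  "gt M (Node F) = Poly_Mapping.single {#Node (F + M)#} 1 +
     Bp (sum_mset (image_mset (\<lambda>t. Poly_Mapping.single (F - {#t#}) 1 * gt M t) F))"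

definition gf :: "forest \<Rightarrow> forest \<Rightarrow> H" where
  "gf M F = sum_mset (image_mset (\<lambda>t. Poly_Mapping.single (F - {#t#}) 1 * gt M t) F)"

primrec wt :: "tree \<Rightarrow> nat" where
  "wt (Node F) = 1 + sum_mset (image_mset wt F)"

definition wF :: "forest \<Rightarrow> nat" where
  "wF F = sum_mset (image_mset wt F)"

lemma smul_conv_mult: "smul c (x :: 'a::monoid_add \<Rightarrow>\<^sub>0 rat) = Poly_Mapping.single 0 c * x"
  unfolding smul_def by (rule Poly_Mapping.mult_map_scale_conv_mult)

lemma smul_mult_left: "smul c ((x :: 'a::comm_monoid_add \<Rightarrow>\<^sub>0 rat) * y) = smul c x * y"
  by (simp add: smul_conv_mult mult.assoc)

lemma smul_mult_right: "(x :: 'a::comm_monoid_add \<Rightarrow>\<^sub>0 rat) * smul c y = smul c (x * y)"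
  by (simp add: smul_conv_mult mult.left_commute)

lemma lin_mult:
  fixes f :: "'a::comm_monoid_add \<Rightarrow> ('b::comm_monoid_add \<Rightarrow>\<^sub>0 rat)"
  assumes "\<And>a b. f (a + b) = f a * f b"
  shows "lin f (x * y) = lin f x * lin f y"
proof (induction x rule: lin_induct)
  case zero then show ?case by simp
next
  case (add a b) then show ?case by (simp add: distrib_right lin_add)
next
  case (single k c)
  show ?case
  proof (induction y rule: lin_induct)
    case zero then show ?case by simp
  next
    case (add a b) then show ?case by (simp add: distrib_left lin_add)
  next
    case (single l d)
    show ?case by (simp add: Poly_Mapping.mult_single assms smul_conv_mult ac_simps)
  qed
qed

lemma lin_one: "lin f (1 :: 'a::comm_monoid_add \<Rightarrow>\<^sub>0 rat) = f 0"
  by (simp flip: single_one)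

definition e1 :: "H \<Rightarrow> H2" where "e1 = lin (\<lambda>a. Poly_Mapping.single (a, {#}) 1)"
definition e2 :: "H \<Rightarrow> H2" where "e2 = lin (\<lambda>b. Poly_Mapping.single ({#}, b) 1)"

lemma e1_mult: "e1 (x * y) = e1 x * e1 y"
  unfolding e1_def by (rule lin_mult) (simp add: Poly_Mapping.mult_single)
lemma e2_mult: "e2 (x * y) = e2 x * e2 y"
  unfolding e2_def by (rule lin_mult) (simp add: Poly_Mapping.mult_single)

lemma tensor2_conv: "tensor2 x y = e1 x * e2 y"
proof (induction x rule: lin_induct)
  case zero then show ?case by (simp add: tensor2_def e1_def)
next
  case (add a b) then show ?case by (simp add: tensor2_def e1_def lin_add distrib_right)
next
  case (single k c)
  show ?case
  proof (induction y rule: lin_induct)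
    case zero then show ?case by (simp add: tensor2_def e2_def)
  next
    case (add a b) then show ?case
      by (simp add: tensor2_def e1_def e2_def lin_add distrib_left smul_add lin_plus_fun)
  next
    case (single l d)
    show ?case by (simp add: tensor2_def e1_def e2_def Poly_Mapping.mult_single)
  qed
qed

lemma tensor2_single [simp]: "tensor2 (Poly_Mapping.single a c) (Poly_Mapping.single b d) = Poly_Mapping.single (a, b) (c * d)"
  by (simp add: tensor2_def)

lemma tensor2_mult: "tensor2 (x * x') (y * y') = tensor2 x y * tensor2 x' y'"
  by (simp add: tensor2_conv e1_mult e2_mult ac_simps)

lemma tensor2_add1: "tensor2 (x + x') y = tensor2 x y + tensor2 x' y"
  by (simp add: tensor2_conv e1_def lin_add distrib_right)
lemma tensor2_add2: "tensor2 x (y + y') = tensor2 x y + tensor2 x y'"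
  by (simp add: tensor2_conv e2_def lin_add distrib_left)
lemma tensor2_diff1: "tensor2 (x - x') y = tensor2 x y - tensor2 x' y"
  by (simp add: tensor2_conv e1_def lin_diff left_diff_distrib)
lemma tensor2_diff2: "tensor2 x (y - y') = tensor2 x y - tensor2 x y'"
  by (simp add: tensor2_conv e2_def lin_diff right_diff_distrib)
lemma tensor2_smul1: "tensor2 (smul c x) y = smul c (tensor2 x y)"
  by (simp add: tensor2_conv e1_def lin_smul smul_mult_left)
lemma tensor2_smul2: "tensor2 x (smul c y) = smul c (tensor2 x y)"
  by (simp add: tensor2_conv e2_def lin_smul smul_mult_right)
lemma tensor2_zero1 [simp]: "tensor2 0 y = 0"
  by (simp add: tensor2_conv e1_def)
lemma tensor2_zero2 [simp]: "tensor2 x 0 = 0"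
  by (simp add: tensor2_conv e2_def)
lemma tensor2_lin1: "tensor2 (lin f x) y = lin (\<lambda>a. tensor2 (f a) y) x"
  by (induction x rule: lin_induct) (auto simp: lin_add tensor2_add1 tensor2_smul1)
lemma tensor2_lin2: "tensor2 x (lin f y) = lin (\<lambda>a. tensor2 x (f a)) y"
  by (induction y rule: lin_induct) (auto simp: lin_add tensor2_add2 tensor2_smul2)


lemma one_H2: "(1::H2) = Poly_Mapping.single ({#}, {#}) 1"
  by (metis single_one zero_prod_def)

lemma one_H: "(1::H) = Poly_Mapping.single {#} 1"
  by simp

lemma tensor2_single_one2 [simp]: "tensor2 (Poly_Mapping.single a c) 1 = Poly_Mapping.single (a, {#}) c"
  by (metis mult.right_neutral single_one tensor2_single)
lemma tensor2_single_one1 [simp]: "tensor2 1 (Poly_Mapping.single b c) = Poly_Mapping.single ({#}, b) c"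
  by (metis mult_1 single_one tensor2_single)

lemma DF_empty [simp]: "DF {#} = 1"
  by (simp add: DF_def)
lemma DF_add: "DF (A + B) = DF A * DF B"
  by (simp add: DF_def)
lemma DF_single [simp]: "DF {#t#} = Dt t"
  by (simp add: DF_def)
lemma Dt_Node: "Dt (Node F) = Poly_Mapping.single ({#Node F#}, {#}) 1 + idBp (DF F)"
  by (simp add: DF_def)
declare Dt.simps [simp del]

lemma Dh_single [simp]: "Dh (Poly_Mapping.single F c) = smul c (DF F)"
  by (simp add: Dh_def)
lemma Dh_mult: "Dh (x * y) = Dh x * Dh y"
  unfolding Dh_def by (rule lin_mult) (simp add: DF_add)
lemma Dh_add: "Dh (x + y) = Dh x + Dh y"
  by (simp add: Dh_def lin_add)
lemma Dh_smul: "Dh (smul c x) = smul c (Dh x)"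
  by (simp add: Dh_def lin_smul)

lemma Bp_single [simp]: "Bp (Poly_Mapping.single F c) = Poly_Mapping.single {#Node F#} c"
  by (simp add: Bp_def)
lemma Bp_add: "Bp (x + y) = Bp x + Bp y"
  by (simp add: Bp_def lin_add)
lemma Bp_smul: "Bp (smul c x) = smul c (Bp x)"
  by (simp add: Bp_def lin_smul)
lemma idBp_single [simp]: "idBp (Poly_Mapping.single (A, B) c) = Poly_Mapping.single (A, {#Node B#}) c"
  by (simp add: idBp_def)
lemma idBp_add: "idBp (x + y) = idBp x + idBp y"
  by (simp add: idBp_def lin_add)
lemma idBp_smul: "idBp (smul c x) = smul c (idBp x)"
  by (simp add: idBp_def lin_smul)
lemma idBp_zero [simp]: "idBp 0 = 0"
  by (simp add: idBp_def)

lemma Dh_Bp: "Dh (Bp x) = tensor2 (Bp x) 1 + idBp (Dh x)"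
proof (induction x rule: lin_induct)
  case zero then show ?case by (simp add: Bp_def Dh_def)
next
  case (add a b) then show ?case by (simp add: Bp_add Dh_add idBp_add tensor2_add1)
next
  case (single k c)
  show ?case by (simp add: Dt_Node smul_add idBp_smul)
qed

lemma idBp_tensor2: "idBp (tensor2 x y) = tensor2 x (Bp y)"
proof (induction x rule: lin_induct)
  case zero then show ?case by simp
next
  case (add a b) then show ?case by (simp add: tensor2_add1 idBp_add)
next
  case (single k c)
  show ?case
  proof (induction y rule: lin_induct)
    case zero then show ?case by (simp add: Bp_def)
  next
    case (add a b) then show ?case by (simp add: tensor2_add2 idBp_add Bp_add)
  next
    case (single l d) then show ?case by simp
  qed
qed

lemma gf_empty [simp]: "gf M {#} = 0"
  by (simp add: gf_def)
lemma gf_single [simp]: "gf M {#t#} = gt M t"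
  by (simp add: gf_def)
lemma gt_Node: "gt M (Node F) = Poly_Mapping.single {#Node (F + M)#} 1 + Bp (gf M F)"
  by (simp add: gf_def)
declare gt.simps [simp del]

lemma single_add_mult: "Poly_Mapping.single (a + b) (1::rat) = Poly_Mapping.single a 1 * Poly_Mapping.single b 1"
  by (simp add: Poly_Mapping.mult_single)

lemma gf_add: "gf M (A + B) = gf M A * Poly_Mapping.single B 1 + Poly_Mapping.single A 1 * gf M B"
proof -
  have 1: "image_mset (\<lambda>t. Poly_Mapping.single (A + B - {#t#}) 1 * gt M t) A
      = image_mset (\<lambda>t. Poly_Mapping.single (A - {#t#}) 1 * gt M t * Poly_Mapping.single B 1) A"
  proof (rule image_mset_cong)
    fix t assume "t \<in># A"
    then have "A + B - {#t#} = (A - {#t#}) + B" by simp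
    then show "Poly_Mapping.single (A + B - {#t#}) 1 * gt M t = Poly_Mapping.single (A - {#t#}) 1 * gt M t * Poly_Mapping.single B 1"
      by (simp add: single_add_mult ac_simps)
  qed
  have 2: "image_mset (\<lambda>t. Poly_Mapping.single (A + B - {#t#}) 1 * gt M t) B
      = image_mset (\<lambda>t. Poly_Mapping.single A 1 * (Poly_Mapping.single (B - {#t#}) 1 * gt M t)) B"
  proof (rule image_mset_cong)
    fix t assume "t \<in># B"
    then have "A + B - {#t#} = A + (B - {#t#})" by simp
    then show "Poly_Mapping.single (A + B - {#t#}) 1 * gt M t = Poly_Mapping.single A 1 * (Poly_Mapping.single (B - {#t#}) 1 * gt M t)"
      by (simp add: single_add_mult ac_simps)
  qed
  show ?thesis
    unfolding gf_def image_mset_union sum_mset.union 1 2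
    by (simp add: sum_mset_distrib_left sum_mset_distrib_right)
qed

lemma gf_add_mset: "gf M (add_mset t N) = gf M N * Poly_Mapping.single {#t#} 1 + Poly_Mapping.single N 1 * gt M t"
  using gf_add[of M N "{#t#}"] by simp

lemma DF_add_mset: "DF (add_mset t N) = DF N * Dt t"
  using DF_add[of N "{#t#}"] by simp

definition L1 :: "forest \<Rightarrow> H2 \<Rightarrow> H2" where
  "L1 M = lin (\<lambda>k. tensor2 (gf M (fst k)) (Poly_Mapping.single (snd k) 1))"

definition L2 :: "H2 \<Rightarrow> H2 \<Rightarrow> H2" where
  "L2 X Y = lin (\<lambda>k. lin (\<lambda>m. tensor2 (Poly_Mapping.single (fst k + fst m) 1) (gf (snd m) (snd k))) Y) X"

lemma single_pair: "Poly_Mapping.single (A, B) c = smul c (tensor2 (Poly_Mapping.single A 1) (Poly_Mapping.single B 1))"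
  by simp

lemma L1_single [simp]: "L1 M (Poly_Mapping.single (A, B) c) = smul c (tensor2 (gf M A) (Poly_Mapping.single B 1))"
  by (simp add: L1_def)
lemma L1_add: "L1 M (x + y) = L1 M x + L1 M y"
  by (simp add: L1_def lin_add)
lemma L1_zero [simp]: "L1 M 0 = 0"
  by (simp add: L1_def)

lemma L2_single [simp]: "L2 (Poly_Mapping.single (A, B) c) (Poly_Mapping.single (M1, M2) d) =
   smul (c * d) (tensor2 (Poly_Mapping.single (A + M1) 1) (gf M2 B))"
  by (simp add: L2_def)
lemma L2_add1: "L2 (x + y) z = L2 x z + L2 y z"
  by (simp add: L2_def lin_add)
lemma L2_add2: "L2 x (y + z) = L2 x y + L2 x z"
  by (simp add: L2_def lin_add lin_plus_fun)
lemma L2_zero1 [simp]: "L2 0 z = 0"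
  by (simp add: L2_def)
lemma L2_zero2 [simp]: "L2 x 0 = 0"
  by (simp add: L2_def)

lemma L1_mult: "L1 M (X * Y) = L1 M X * Y + X * L1 M Y"
proof (induction X rule: lin_induct)
  case zero then show ?case by simp
next
  case (add a b) then show ?case by (simp add: L1_add distrib_right distrib_left)
next
  case (single k c)
  obtain A B where k: "k = (A, B)" by fastforce
  show ?case
  proof (induction Y rule: lin_induct)
    case zero then show ?case by simp
  next
    case (add a b) then show ?case by (simp add: L1_add distrib_right distrib_left)
  next
    case (single l d)
    obtain A' B' where l: "l = (A', B')" by fastforce
    have "tensor2 (gf M (A + A')) (Poly_Mapping.single (B + B') 1)
      = tensor2 (gf M A) (Poly_Mapping.single B 1) * tensor2 (Poly_Mapping.single A' 1) (Poly_Mapping.single B' 1)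
      + tensor2 (Poly_Mapping.single A 1) (Poly_Mapping.single B 1) * tensor2 (gf M A') (Poly_Mapping.single B' 1)"
      by (simp only: gf_add single_add_mult tensor2_add1 tensor2_mult)
    moreover have eqs: "Poly_Mapping.single (A', B') d = Poly_Mapping.single 0 d * Poly_Mapping.single (A', B') (1::rat)"
      "Poly_Mapping.single (A, B) c = Poly_Mapping.single 0 c * Poly_Mapping.single (A, B) (1::rat)"
      "Poly_Mapping.single 0 (c * d) = Poly_Mapping.single 0 c * (Poly_Mapping.single (0::forest \<times> forest) d)"
      by (simp_all add: Poly_Mapping.mult_single)
    ultimately show ?case
      apply (simp add: k l Poly_Mapping.mult_single smul_add smul_conv_mult distrib_left)
      apply (simp only: eqs ac_simps)
      done
  qed
qed

lemma L1_idBp: "L1 M (idBp X) = idBp (L1 M X)"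
proof (induction X rule: lin_induct)
  case zero then show ?case by simp
next
  case (add a b) then show ?case by (simp add: L1_add idBp_add)
next
  case (single k c)
  obtain A B where k: "k = (A, B)" by fastforce
  show ?case by (simp add: k idBp_smul idBp_tensor2)
qed

lemma L2_single_empty [simp]: "L2 (Poly_Mapping.single (A, {#}) c) Z = 0"
  by (simp add: L2_def)

lemma lin_induct1 [case_names zero add smul single]:
  fixes x :: "'a \<Rightarrow>\<^sub>0 rat"
  assumes "P 0" "\<And>a b. P a \<Longrightarrow> P b \<Longrightarrow> P (a + b)" "\<And>c a. P a \<Longrightarrow> P (smul c a)"
    "\<And>k. P (Poly_Mapping.single k 1)"
  shows "P x"
proof (induction x rule: lin_induct)
  case (single k c)
  have "P (smul c (Poly_Mapping.single k 1))" by (intro assms)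
  then show ?case by simp
qed (use assms in auto)

lemma smul_pull_left: "smul c (x::'a::comm_monoid_add \<Rightarrow>\<^sub>0 rat) * y = smul c (x * y)"
  by (simp add: smul_conv_mult mult.assoc)
lemma smul_pull_right: "(x::'a::comm_monoid_add \<Rightarrow>\<^sub>0 rat) * smul c y = smul c (x * y)"
  by (simp add: smul_conv_mult mult.left_commute)

lemma L2_smul1: "L2 (smul c x) z = smul c (L2 x z)"
  by (simp add: L2_def lin_smul)
lemma L2_smul2: "L2 x (smul c z) = smul c (L2 x z)"
  by (simp add: L2_def lin_smul lin_smul_fun)

lemma L2_mult1: "L2 (X * Y) Z = L2 X Z * Y + X * L2 Y Z"
proof (induction X rule: lin_induct1)
  case zero then show ?case by simp
next
  case (add a b) then show ?case by (simp add: L2_add1 distrib_right distrib_left)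
next
  case (smul c a) then show ?case by (simp add: smul_pull_left smul_pull_right L2_smul1 smul_add)
next
  case (single k)
  obtain A B where k: "k = (A, B)" by fastforce
  show ?case
  proof (induction Y rule: lin_induct1)
    case zero then show ?case by simp
  next
    case (add a b) then show ?case by (simp add: L2_add1 distrib_right distrib_left)
  next
    case (smul c a) then show ?case by (simp add: smul_pull_left smul_pull_right L2_smul1 smul_add)
  next
    case (single l)
    obtain A' B' where l: "l = (A', B')" by fastforce
    show ?case
    proof (induction Z rule: lin_induct1)
      case zero then show ?case by simp
    next
      case (add a b) then show ?case by (simp add: L2_add2 distrib_right distrib_left)
    next
      case (smul c a) then show ?case by (simp add: smul_pull_left smul_pull_right L2_smul2 smul_add)
    next
      case (single m)
      obtain M1 M2 where m: "m = (M1, M2)" by fastforce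
      have e1: "Poly_Mapping.single (A + A' + M1) (1::rat) = Poly_Mapping.single (A + M1) 1 * Poly_Mapping.single A' 1"
        by (simp add: Poly_Mapping.mult_single add_ac)
      have e2: "Poly_Mapping.single (A + A' + M1) (1::rat) = Poly_Mapping.single A 1 * Poly_Mapping.single (A' + M1) 1"
        by (simp add: Poly_Mapping.mult_single add_ac)
      have t1: "tensor2 (Poly_Mapping.single (A + A' + M1) 1) (gf M2 B * Poly_Mapping.single B' 1)
          = tensor2 (Poly_Mapping.single (A + M1) 1) (gf M2 B) * tensor2 (Poly_Mapping.single A' 1) (Poly_Mapping.single B' 1)"
        unfolding e1 by (rule tensor2_mult)
      have t2: "tensor2 (Poly_Mapping.single (A + A' + M1) 1) (Poly_Mapping.single B 1 * gf M2 B')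
          = tensor2 (Poly_Mapping.single A 1) (Poly_Mapping.single B 1) * tensor2 (Poly_Mapping.single (A' + M1) 1) (gf M2 B')"
        unfolding e2 by (rule tensor2_mult)
      have "L2 (Poly_Mapping.single k 1 * Poly_Mapping.single l 1) (Poly_Mapping.single m 1)
          = tensor2 (Poly_Mapping.single (A + A' + M1) 1) (gf M2 (B + B'))"
        by (simp add: k l m Poly_Mapping.mult_single)
      also have "\<dots> = tensor2 (Poly_Mapping.single (A + M1) 1) (gf M2 B) * tensor2 (Poly_Mapping.single A' 1) (Poly_Mapping.single B' 1)
          + tensor2 (Poly_Mapping.single A 1) (Poly_Mapping.single B 1) * tensor2 (Poly_Mapping.single (A' + M1) 1) (gf M2 B')"
        by (simp only: gf_add tensor2_add2 t1 t2)
      also have "\<dots> = L2 (Poly_Mapping.single k 1) (Poly_Mapping.single m 1) * Poly_Mapping.single l 1 +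
          Poly_Mapping.single k 1 * L2 (Poly_Mapping.single l 1) (Poly_Mapping.single m 1)"
        by (simp add: k l m)
      finally show ?case .
    qed
  qed
qed

lemma L2_idBp: "L2 (idBp X) Z = idBp (X * Z) + idBp (L2 X Z)"
proof (induction X rule: lin_induct)
  case zero then show ?case by simp
next
  case (add a b) then show ?case by (simp add: L2_add1 idBp_add distrib_right)
next
  case (single k c)
  obtain A B where k: "k = (A, B)" by fastforce
  show ?case
  proof (induction Z rule: lin_induct)
    case zero then show ?case by simp
  next
    case (add a b) then show ?case by (simp add: L2_add2 idBp_add distrib_left)
  next
    case (single m e)
    obtain M1 M2 where m: "m = (M1, M2)" by fastforce
    show ?case
      by (simp add: k m gt_Node Poly_Mapping.mult_single tensor2_add2 smul_add idBp_smul idBp_tensor2)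
  qed
qed

lemma KEY_forest:
  assumes "\<And>t. t \<in># N \<Longrightarrow> Dh (gt M t) = L1 M (Dt t) + L2 (Dt t) (DF M)"
  shows "Dh (gf M N) = L1 M (DF N) + L2 (DF N) (DF M)"
  using assms
proof (induction N)
  case empty
  then show ?case by (simp add: one_H2 Dh_def)
next
  case (add t N)
  have "Dh (gf M (N + {#t#})) = Dh (gf M N) * Dt t + DF N * Dh (gt M t)"
    by (simp add: gf_add_mset Dh_add Dh_mult)
  also have "\<dots> = (L1 M (DF N) + L2 (DF N) (DF M)) * Dt t + DF N * (L1 M (Dt t) + L2 (Dt t) (DF M))"
    using add by simp
  also have "\<dots> = L1 M (DF (N + {#t#})) + L2 (DF (N + {#t#})) (DF M)"
    by (simp add: DF_add_mset L1_mult L2_mult1 algebra_simps)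
  finally show ?case by simp
qed

lemma KEY_tree: "Dh (gt M t) = L1 M (Dt t) + L2 (Dt t) (DF M)"
proof (induction t)
  case (Node F)
  have IH: "Dh (gf M F) = L1 M (DF F) + L2 (DF F) (DF M)"
    using Node by (intro KEY_forest) auto
  have "Dh (gt M (Node F)) = Poly_Mapping.single ({#Node (F + M)#}, {#}) 1 + idBp (DF F * DF M)
     + tensor2 (Bp (gf M F)) 1 + idBp (L1 M (DF F) + L2 (DF F) (DF M))"
    by (simp add: gt_Node Dh_add Dh_Bp Dt_Node DF_add IH)
  also have "\<dots> = L1 M (Dt (Node F)) + L2 (Dt (Node F)) (DF M)"
    by (simp add: Dt_Node L1_add L2_add1 L1_idBp L2_idBp gt_Node tensor2_add1 idBp_add)
  finally show ?case .
qed

lemma KEY: "Dh (gf M N) = L1 M (DF N) + L2 (DF N) (DF M)"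
  by (rule KEY_forest) (rule KEY_tree)


lemma wF_add [simp]: "wF (A + B) = wF A + wF B"
  by (simp add: wF_def)
lemma wF_empty [simp]: "wF {#} = 0"
  by (simp add: wF_def)
lemma wF_single [simp]: "wF {#t#} = wt t"
  by (simp add: wF_def)
lemma wF_add_mset [simp]: "wF (add_mset t N) = wt t + wF N"
  by (simp add: wF_def)
lemma wt_Node: "wt (Node F) = 1 + wF F"
  by (simp add: wF_def)
declare wt.simps [simp del]
lemma wt_pos: "wt t > 0"
  by (cases t) (simp add: wt_Node)
lemma wF_zero_iff: "wF N = 0 \<longleftrightarrow> N = {#}"
  by (induction N) (auto simp: wt_pos)

lemma keys_lin: "Poly_Mapping.keys (lin f x) \<subseteq> (\<Union>k\<in>Poly_Mapping.keys x. Poly_Mapping.keys (f k))"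
proof -
  have s: "Poly_Mapping.keys (smul c y) \<subseteq> Poly_Mapping.keys y" for c y
    by (auto simp: in_keys_iff)
  have "(\<Union>k\<in>Poly_Mapping.keys x. Poly_Mapping.keys (smul (Poly_Mapping.lookup x k) (f k)))
     \<subseteq> (\<Union>k\<in>Poly_Mapping.keys x. Poly_Mapping.keys (f k))" by (intro UN_mono subset_refl s)
  then show ?thesis
    unfolding lin_def using keys_sum[of "\<lambda>k. smul (Poly_Mapping.lookup x k) (f k)" "Poly_Mapping.keys x"]
    by (rule subset_trans[rotated])
qed

definition graded :: "nat \<Rightarrow> H2 \<Rightarrow> bool" where
  "graded n X \<longleftrightarrow> (\<forall>k\<in>Poly_Mapping.keys X. wF (fst k) + wF (snd k) = n)"

lemma graded_add: "graded n X \<Longrightarrow> graded n Y \<Longrightarrow> graded n (X + Y)"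
  unfolding graded_def
proof
  fix k assume "\<forall>k\<in>Poly_Mapping.keys X. wF (fst k) + wF (snd k) = n" "\<forall>k\<in>Poly_Mapping.keys Y. wF (fst k) + wF (snd k) = n"
    "k \<in> Poly_Mapping.keys (X + Y)"
  moreover have "k \<in> Poly_Mapping.keys X \<union> Poly_Mapping.keys Y"
    using keys_add[of X Y] \<open>k \<in> Poly_Mapping.keys (X + Y)\<close> by (rule subsetD)
  ultimately show "wF (fst k) + wF (snd k) = n" by auto
qed
lemma graded_mult: "graded a X \<Longrightarrow> graded b Y \<Longrightarrow> graded (a + b) (X * Y)"
  unfolding graded_def
proof
  fix k assume A: "\<forall>k\<in>Poly_Mapping.keys X. wF (fst k) + wF (snd k) = a" "\<forall>k\<in>Poly_Mapping.keys Y. wF (fst k) + wF (snd k) = b"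
    "k \<in> Poly_Mapping.keys (X * Y)"
  have "k \<in> {u + v |u v. u \<in> Poly_Mapping.keys X \<and> v \<in> Poly_Mapping.keys Y}"
    using keys_mult[of X Y] \<open>k \<in> Poly_Mapping.keys (X * Y)\<close> by (rule subsetD)
  then obtain u v where "k = u + v" "u \<in> Poly_Mapping.keys X" "v \<in> Poly_Mapping.keys Y" by blast
  with A show "wF (fst k) + wF (snd k) = a + b" by auto
qed
lemma graded_single: "wF A + wF B = n \<Longrightarrow> graded n (Poly_Mapping.single (A, B) c)"
  unfolding graded_def by simp
lemma graded_idBp: "graded n X \<Longrightarrow> graded (Suc n) (idBp X)"
  unfolding graded_def idBp_def using keys_lin[of _ X]
  by (force split: prod.splits simp: wt_Node)

lemma graded_Dt: "graded (wt t) (Dt t)"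
proof (induction t)
  case (Node F)
  have "graded (wF F) (DF F)"
    using Node
  proof (induction F)
    case empty then show ?case by (simp add: one_H2 graded_single)
  next
    case (add t F)
    then have "graded (wF F + wt t) (DF F * Dt t)"
      by (intro graded_mult) auto
    then show ?case by (simp add: DF_add_mset add.commute)
  qed
  then show ?case
    by (auto simp: Dt_Node wt_Node intro!: graded_add graded_single dest: graded_idBp)
qed

lemma graded_DF: "graded (wF F) (DF F)"
proof (induction F)
  case empty then show ?case by (simp add: one_H2 graded_single)
next
  case (add t F)
  then have "graded (wF F + wt t) (DF F * Dt t)"
    by (intro graded_mult graded_Dt) auto
  then show ?case by (simp add: DF_add_mset add.commute)
qed

lemma gt_empty: "gt {#} t = Poly_Mapping.single {#t#} (of_nat (wt t))"
proof (induction t)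
  case (Node F)
  have "gf {#} F = Poly_Mapping.single F (of_nat (wF F))"
    using Node
  proof (induction F)
    case empty then show ?case by simp
  next
    case (add t F)
    then show ?case
      by (simp add: gf_add_mset Poly_Mapping.mult_single single_add[symmetric] add.commute)
  qed
  then show ?case
    by (simp add: gt_Node wt_Node single_add[symmetric] add.commute)
qed

lemma gf_empty_left: "gf {#} N = Poly_Mapping.single N (of_nat (wF N))"
proof (induction N)
  case empty then show ?case by simp
next
  case (add t F)
  then show ?case
    by (simp add: gf_add_mset gt_empty Poly_Mapping.mult_single single_add[symmetric] add.commute)
qed

lemma lin_swap: "lin (\<lambda>a. lin (\<lambda>b. f a b) y) x = lin (\<lambda>b. lin (\<lambda>a. f a b) x) y"
proof (induction x rule: lin_induct1)
  case zero then show ?case by simp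
next
  case (add a b) then show ?case by (simp add: lin_add lin_plus_fun)
next
  case (smul c a) then show ?case by (simp add: lin_smul lin_smul_fun)
next
  case (single k) then show ?case by simp
qed

definition topA :: "forest \<Rightarrow> forest \<Rightarrow> H" where
  "topA M N = smul (1 / of_nat (wF N)) (gf M N)"

definition topH :: "H \<Rightarrow> H \<Rightarrow> H" where
  "topH x y = lin (\<lambda>M. lin (\<lambda>N. topA M N) y) x"

definition IdG :: "H \<Rightarrow> H2 \<Rightarrow> H2" where
  "IdG p Y = lin (\<lambda>k. tensor2 (Poly_Mapping.single (fst k) 1) (topH (Poly_Mapping.single (snd k) 1) p)) Y"

definition Phi1 :: "forest \<Rightarrow> H2 \<Rightarrow> H2" where
  "Phi1 M = lin (\<lambda>k. smul (1 / of_nat (wF (fst k) + wF (snd k))) (tensor2 (gf M (fst k)) (Poly_Mapping.single (snd k) 1)))"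

definition Phi2 :: "H2 \<Rightarrow> H2 \<Rightarrow> H2" where
  "Phi2 X Y = lin (\<lambda>k. smul (1 / of_nat (wF (fst k) + wF (snd k)))
      (lin (\<lambda>m. tensor2 (Poly_Mapping.single (fst k + fst m) 1) (gf (snd m) (snd k))) Y)) X"

lemma Phi1_L1:
  assumes "graded n X"
  shows "smul (1 / of_nat n) (L1 M X) = Phi1 M X"
proof -
  have "smul (1 / of_nat n) (L1 M X) = lin (\<lambda>k. smul (1 / of_nat n) (tensor2 (gf M (fst k)) (Poly_Mapping.single (snd k) 1))) X"
    by (simp add: L1_def lin_smul_fun)
  also have "\<dots> = Phi1 M X"
    unfolding Phi1_def
  proof (rule lin_cong)
    fix k assume "k \<in> Poly_Mapping.keys X"
    then have "wF (fst k) + wF (snd k) = n" using assms by (auto simp: graded_def)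
    then show "smul (1 / of_nat n) (tensor2 (gf M (fst k)) (Poly_Mapping.single (snd k) 1)) =
      smul (1 / of_nat (wF (fst k) + wF (snd k))) (tensor2 (gf M (fst k)) (Poly_Mapping.single (snd k) 1))"
      by simp
  qed
  finally show ?thesis .
qed

lemma Phi2_L2:
  assumes "graded n X"
  shows "smul (1 / of_nat n) (L2 X Y) = Phi2 X Y"
proof -
  have "smul (1 / of_nat n) (L2 X Y) = lin (\<lambda>k. smul (1 / of_nat n)
      (lin (\<lambda>m. tensor2 (Poly_Mapping.single (fst k + fst m) 1) (gf (snd m) (snd k))) Y)) X"
    by (simp add: L2_def lin_smul_fun)
  also have "\<dots> = Phi2 X Y"
    unfolding Phi2_def
  proof (rule lin_cong)
    fix k assume "k \<in> Poly_Mapping.keys X"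
    then have "wF (fst k) + wF (snd k) = n" using assms by (auto simp: graded_def)
    then show "smul (1 / of_nat n) (lin (\<lambda>m. tensor2 (Poly_Mapping.single (fst k + fst m) 1) (gf (snd m) (snd k))) Y) =
      smul (1 / of_nat (wF (fst k) + wF (snd k))) (lin (\<lambda>m. tensor2 (Poly_Mapping.single (fst k + fst m) 1) (gf (snd m) (snd k))) Y)"
      by simp
  qed
  finally show ?thesis .
qed

lemma Dh_lin: "Dh (lin f x) = lin (\<lambda>k. Dh (f k)) x"
  unfolding Dh_def by (rule lin_lin)

lemma Dh_topA: "Dh (topA M N) = Phi1 M (DF N) + Phi2 (DF N) (DF M)"
  unfolding topA_def Dh_smul KEY smul_add
  using Phi1_L1[OF graded_DF] Phi2_L2[OF graded_DF] by simp

lemma tensor2_one2: "tensor2 x 1 = lin (\<lambda>N. Poly_Mapping.single (N, {#}) 1) x"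
  by (simp add: tensor2_def flip: single_one)
lemma tensor2_one1: "tensor2 1 x = lin (\<lambda>N. Poly_Mapping.single ({#}, N) 1) x"
  by (simp add: tensor2_def flip: single_one)

lemma Dh_topH_single:
  assumes prim: "Dh p = tensor2 p 1 + tensor2 1 p"
  shows "Dh (topH (Poly_Mapping.single M 1) p) = tensor2 (topH (Poly_Mapping.single M 1) p) 1 + IdG p (DF M)"
proof -
  have "Dh (topH (Poly_Mapping.single M 1) p) = lin (\<lambda>N. Phi1 M (DF N) + Phi2 (DF N) (DF M)) p"
    by (simp add: topH_def Dh_lin Dh_topA)
  also have "\<dots> = Phi1 M (Dh p) + Phi2 (Dh p) (DF M)"
    by (simp add: lin_plus_fun Dh_def Phi1_def Phi2_def lin_lin)
  also have "Phi1 M (Dh p) = tensor2 (topH (Poly_Mapping.single M 1) p) 1"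
    by (simp add: prim Phi1_def lin_add tensor2_one1 tensor2_one2 lin_lin topH_def tensor2_lin1 topA_def tensor2_smul1 lin_smul)
  also have "Phi2 (Dh p) (DF M) = IdG p (DF M)"
    apply (simp add: prim Phi2_def lin_add tensor2_one1 tensor2_one2 lin_lin IdG_def topH_def tensor2_lin2 topA_def tensor2_smul2)
    apply (subst lin_swap)
    apply (simp add: lin_smul_fun)
    done
  finally show ?thesis .
qed

lemma IdG_lin: "IdG p (lin f x) = lin (\<lambda>k. IdG p (f k)) x"
  unfolding IdG_def by (rule lin_lin)

lemma Dh_topH:
  assumes prim: "Dh p = tensor2 p 1 + tensor2 1 p"
  shows "Dh (topH x p) = tensor2 (topH x p) 1 + IdG p (Dh x)"
proof -
  have eq: "topH x p = lin (\<lambda>M. topH (Poly_Mapping.single M 1) p) x"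
    by (simp add: topH_def)
  have "Dh (topH x p) = lin (\<lambda>M. Dh (topH (Poly_Mapping.single M 1) p)) x"
    by (subst eq, rule Dh_lin)
  also have "\<dots> = lin (\<lambda>M. tensor2 (topH (Poly_Mapping.single M 1) p) 1 + IdG p (DF M)) x"
    using Dh_topH_single[OF prim] by simp
  also have "\<dots> = lin (\<lambda>M. tensor2 (topH (Poly_Mapping.single M 1) p) 1) x + lin (\<lambda>M. IdG p (DF M)) x"
    by (rule lin_plus_fun)
  also have "lin (\<lambda>M. tensor2 (topH (Poly_Mapping.single M 1) p) 1) x = tensor2 (topH x p) 1"
    by (subst eq, rule tensor2_lin1[symmetric])
  also have "lin (\<lambda>M. IdG p (DF M)) x = IdG p (Dh x)"
    by (simp add: Dh_def IdG_lin)
  finally show ?thesis .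
qed


lemma iso_surj: "\<exists>l. iso l = t"
proof (induction t)
  case (Node F)
  obtain xs where xs: "mset xs = F" using ex_mset by blast
  have "\<forall>u\<in>set xs. \<exists>l. iso l = u" using Node xs by auto
  then have "\<forall>u\<in>set xs. iso (SOME l. iso l = u) = u" by (metis (mono_tags, lifting) someI_ex)
  then have "map (iso \<circ> (\<lambda>u. SOME l. iso l = u)) xs = xs" by (simp add: map_idI)
  then have "iso (LNode (map (\<lambda>u. SOME l. iso l = u) xs)) = Node F"
    by (simp add: xs)
  then show ?case by blast
qed

lemma iso_rep [simp]: "iso (rep t) = t"
  unfolding rep_def using iso_surj by (rule someI_ex)

lemma iso_LNode: "iso (LNode ts) = Node (mset (map iso ts))"
  by simp

lemma pos_LNode: "pos (LNode ts) = insert [] (\<Union>j<length ts. Cons j ` pos (ts ! j))"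
proof -
  have "p \<in> pos (LNode ts) \<longleftrightarrow> p \<in> insert [] (\<Union>j<length ts. Cons j ` pos (ts ! j))" for p
    by (cases p) (auto simp: pos_def)
  then show ?thesis by blast
qed

lemma Cons_in_pos: "i # p \<in> pos (LNode ts) \<longleftrightarrow> i < length ts \<and> p \<in> pos (ts ! i)"
  by (simp add: pos_def)

lemma Nil_in_pos [simp]: "[] \<in> pos l"
  by (simp add: pos_def)

lemma finite_pos [simp]: "finite (pos l)"
proof (induction l)
  case (LNode ts)
  then show ?case by (auto simp: pos_LNode)
qed

lemma sum_pos_LNode:
  "(\<Sum>p\<in>pos (LNode ts). f p) = f [] + (\<Sum>j<length ts. \<Sum>p\<in>pos (ts ! j). f (j # p))"
proof -
  have fin: "finite (\<Union>j<length ts. Cons j ` pos (ts ! j))" by auto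
  have "(\<Sum>p\<in>pos (LNode ts). f p) = f [] + (\<Sum>p\<in>(\<Union>j<length ts. Cons j ` pos (ts ! j)). f p)"
    unfolding pos_LNode by (subst sum.insert) (use fin in auto)
  also have "(\<Sum>p\<in>(\<Union>j<length ts. Cons j ` pos (ts ! j)). f p) = (\<Sum>j<length ts. \<Sum>p\<in>Cons j ` pos (ts ! j). f p)"
    by (rule sum.UNION_disjoint) auto
  also have "\<dots> = (\<Sum>j<length ts. \<Sum>p\<in>pos (ts ! j). f (j # p))"
    by (rule sum.cong) (auto simp: sum.reindex)
  finally show ?thesis .
qed

lemma sum_nth_mset: "(\<Sum>j<length xs. f (xs ! j)) = sum_mset (image_mset f (mset xs))"
proof -
  have "sum_mset (image_mset f (mset xs)) = sum_list (map f xs)" by (metis mset_map sum_mset_sum_list)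
  also have "\<dots> = (\<Sum>j<length xs. f (xs ! j))" by (simp add: sum_list_sum_nth atLeast0LessThan)
  finally show ?thesis by simp
qed

lemma card_pos: "card (pos l) = wt (iso l)"
proof (induction l)
  case (LNode ts)
  have "card (pos (LNode ts)) = (\<Sum>p\<in>pos (LNode ts). 1)" by simp
  also have "\<dots> = 1 + (\<Sum>j<length ts. card (pos (ts ! j)))"
    by (subst sum_pos_LNode) simp
  also have "\<dots> = 1 + (\<Sum>j<length ts. wt (iso (ts ! j)))"
    using LNode by (auto intro!: sum.cong)
  also have "\<dots> = wt (iso (LNode ts))"
    by (simp add: wt_Node wF_def sum_nth_mset[of "\<lambda>u. wt (iso u)" ts] multiset.map_comp o_def)
  finally show ?case .
qed

lemma weight_wF: "weight N = wF N"
  by (simp add: weight_def wF_def card_pos)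

definition GL :: "ltree list \<Rightarrow> ltree \<Rightarrow> H" where
  "GL ms l = (\<Sum>p\<in>pos l. Poly_Mapping.single {#iso (graft ms l p)#} 1)"

lemma Bp_sum: "Bp (sum f A) = (\<Sum>a\<in>A. Bp (f a))"
  by (simp add: Bp_def lin_sum)

lemma Bp_single_mult: "Bp (Poly_Mapping.single A 1 * Poly_Mapping.single B 1) = Poly_Mapping.single {#Node (A + B)#} 1"
  by (simp add: Poly_Mapping.mult_single)

lemma GL_gt: "GL ms l = gt (mset (map iso ms)) (iso l)"
proof (induction l)
  case (LNode ts)
  define M where "M = mset (map iso ms)"
  define F where "F = mset (map iso ts)"
  define f where "f u = Poly_Mapping.single (F - {#u#}) 1 * gt M u" for u
  have inner: "(\<Sum>p\<in>pos (ts ! j). Poly_Mapping.single {#iso (graft ms (LNode ts) (j # p))#} 1)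
      = Bp (f (iso (ts ! j)))" if j: "j < length ts" for j
  proof -
    have "(\<Sum>p\<in>pos (ts ! j). Poly_Mapping.single {#iso (graft ms (LNode ts) (j # p))#} (1::rat))
       = (\<Sum>p\<in>pos (ts ! j). Bp (Poly_Mapping.single (F - {#iso (ts ! j)#}) 1 * Poly_Mapping.single {#iso (graft ms (ts ! j) p)#} 1))"
    proof (rule sum.cong)
      fix p
      have "mset (map iso (ts[j := graft ms (ts ! j) p])) = add_mset (iso (graft ms (ts ! j) p)) (F - {#iso (ts ! j)#})"
        using j by (simp add: map_update mset_update F_def)
      then show "Poly_Mapping.single {#iso (graft ms (LNode ts) (j # p))#} (1::rat) =
          Bp (Poly_Mapping.single (F - {#iso (ts ! j)#}) 1 * Poly_Mapping.single {#iso (graft ms (ts ! j) p)#} 1)"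
        by (simp add: Bp_single_mult add.commute)
    qed simp
    also have "\<dots> = Bp (Poly_Mapping.single (F - {#iso (ts ! j)#}) 1 * GL ms (ts ! j))"
      by (simp add: GL_def Bp_sum sum_distrib_left)
    also have "\<dots> = Bp (f (iso (ts ! j)))"
      using LNode j by (simp add: f_def M_def)
    finally show ?thesis .
  qed
  have "GL ms (LNode ts) = Poly_Mapping.single {#Node (F + M)#} 1 +
      (\<Sum>j<length ts. \<Sum>p\<in>pos (ts ! j). Poly_Mapping.single {#iso (graft ms (LNode ts) (j # p))#} 1)"
    unfolding GL_def by (subst sum_pos_LNode) (simp add: F_def M_def)
  also have "(\<Sum>j<length ts. \<Sum>p\<in>pos (ts ! j). Poly_Mapping.single {#iso (graft ms (LNode ts) (j # p))#} (1::rat))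
      = (\<Sum>j<length ts. Bp (f (iso (ts ! j))))"
    by (intro sum.cong refl inner) simp
  also have "\<dots> = Bp (\<Sum>j<length ts. f (iso (ts ! j)))"
    by (simp add: Bp_sum)
  also have "(\<Sum>j<length ts. f (iso (ts ! j))) = sum_mset (image_mset f F)"
    by (simp only: sum_nth_mset[of "\<lambda>u. f (iso u)" ts]) (simp add: F_def multiset.map_comp o_def)
  also have "sum_mset (image_mset f F) = gf M F"
    unfolding gf_def by (rule arg_cong[where f = sum_mset], rule image_mset_cong) (simp add: f_def)
  finally show ?case
    by (simp add: gt_Node F_def M_def)
qed

lemma weight_pos: "N \<noteq> {#} \<Longrightarrow> weight N \<noteq> 0"
  by (simp add: weight_wF wF_zero_iff)

lemma topb_topA: "topb M N = topA M N"
proof (cases "N = {#}")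
  case True then show ?thesis by (simp add: topb_def topA_def)
next
  case False
  define xs where "xs = flist N"
  define ms where "ms = map rep (flist M)"
  have xs: "mset xs = N" unfolding xs_def flist_def by (rule someI_ex) (rule ex_mset)
  have msM: "image_mset iso (mset ms) = M"
  proof -
    have "mset (flist M) = M" unfolding flist_def by (rule someI_ex) (rule ex_mset)
    then show ?thesis by (simp add: ms_def multiset.map_comp o_def)
  qed
  have S: "{(j, p). j < length xs \<and> p \<in> pos (rep (xs ! j))} = Sigma {..<length xs} (\<lambda>j. pos (rep (xs ! j)))"
    by auto
  have "(\<Sum>(j, p)\<in>{(j, p). j < length xs \<and> p \<in> pos (rep (xs ! j))}.
          Poly_Mapping.single (mset (xs[j := iso (graft ms (rep (xs ! j)) p)])) (1::rat))
      = (\<Sum>j<length xs. \<Sum>p\<in>pos (rep (xs ! j)). Poly_Mapping.single (mset (xs[j := iso (graft ms (rep (xs ! j)) p)])) 1)"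
    unfolding S by (rule sum.Sigma[symmetric]) auto
  also have "\<dots> = (\<Sum>j<length xs. Poly_Mapping.single (N - {#xs ! j#}) 1 * gt M (xs ! j))"
  proof (rule sum.cong)
    fix j assume "j \<in> {..<length xs}"
    then have j: "j < length xs" by simp
    have "(\<Sum>p\<in>pos (rep (xs ! j)). Poly_Mapping.single (mset (xs[j := iso (graft ms (rep (xs ! j)) p)])) (1::rat))
      = (\<Sum>p\<in>pos (rep (xs ! j)). Poly_Mapping.single (N - {#xs ! j#}) 1 * Poly_Mapping.single {#iso (graft ms (rep (xs ! j)) p)#} 1)"
      using j by (intro sum.cong) (auto simp: mset_update xs Poly_Mapping.mult_single add.commute)
    also have "\<dots> = Poly_Mapping.single (N - {#xs ! j#}) 1 * GL ms (rep (xs ! j))"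
      by (simp add: GL_def sum_distrib_left)
    also have "\<dots> = Poly_Mapping.single (N - {#xs ! j#}) 1 * gt M (xs ! j)"
      by (simp add: GL_gt msM)
    finally show "(\<Sum>p\<in>pos (rep (xs ! j)). Poly_Mapping.single (mset (xs[j := iso (graft ms (rep (xs ! j)) p)])) (1::rat))
      = Poly_Mapping.single (N - {#xs ! j#}) 1 * gt M (xs ! j)" .
  qed simp
  also have "\<dots> = gf M N"
    by (simp add: sum_nth_mset[of "\<lambda>u. Poly_Mapping.single (N - {#u#}) 1 * gt M u" xs] xs gf_def)
  finally show ?thesis
    using False by (simp add: topb_def topA_def xs_def[symmetric] ms_def[symmetric] weight_wF)
qed

lemma top_topH: "top x y = topH x y"
  by (simp add: top_def topH_def lin_def topb_topA smul_sum)


definition antichain :: "nat list set \<Rightarrow> bool" where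
  "antichain C \<longleftrightarrow> (\<forall>p\<in>C. \<forall>q\<in>C. (\<exists>r. q = p @ r) \<longrightarrow> p = q)"

definition AC :: "ltree \<Rightarrow> nat list set set" where
  "AC l = {C. C \<subseteq> pos l - {[]} \<and> antichain C}"

lemma adm_cuts_AC: "adm_cuts l = AC l - {{}}"
  by (auto simp: adm_cuts_def AC_def antichain_def)

lemma empty_AC [simp]: "{} \<in> AC l"
  by (simp add: AC_def antichain_def)

lemma finite_AC: "finite (AC l)"
proof -
  have "AC l \<subseteq> Pow (pos l)" by (auto simp: AC_def)
  then show ?thesis by (rule finite_subset) simp
qed

lemma finite_AC_elem: "C \<in> AC l \<Longrightarrow> finite C"
  unfolding AC_def using finite_subset[of C "pos l"] by auto

lemma Nil_notin_AC: "C \<in> AC l \<Longrightarrow> [] \<notin> C"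
  by (auto simp: AC_def)

definition C0 :: "nat list set \<Rightarrow> nat list set" where
  "C0 C = {p. 0 # p \<in> C}"
definition Ct :: "nat list set \<Rightarrow> nat list set" where
  "Ct C = {i # p | i p. Suc i # p \<in> C}"
definition sh :: "nat list \<Rightarrow> nat list" where
  "sh q = Suc (hd q) # tl q"
definition phi :: "nat list set \<times> nat list set \<Rightarrow> nat list set" where
  "phi AB = Cons 0 ` fst AB \<union> sh ` snd AB"

lemma Ct_mem [simp]: "i # p \<in> Ct C \<longleftrightarrow> Suc i # p \<in> C"
  by (simp add: Ct_def)
lemma Nil_notin_Ct [simp]: "[] \<notin> Ct C"
  by (simp add: Ct_def)
lemma C0_mem [simp]: "p \<in> C0 C \<longleftrightarrow> 0 # p \<in> C"
  by (simp add: C0_def)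

lemma sh_Cons [simp]: "sh (i # p) = Suc i # p"
  by (simp add: sh_def)

lemma phi_decomp: "[] \<notin> C \<Longrightarrow> C = phi (C0 C, Ct C)"
proof -
  assume "[] \<notin> C"
  have "p \<in> C \<longleftrightarrow> p \<in> phi (C0 C, Ct C)" for p
  proof (cases p)
    case Nil then show ?thesis using \<open>[] \<notin> C\<close> by (auto simp: phi_def sh_def)
  next
    case (Cons i q)
    show ?thesis
    proof (cases i)
      case 0 then show ?thesis using Cons by (auto simp: phi_def sh_def)
    next
      case (Suc j)
      have "Suc j # q \<in> sh ` Ct C \<longleftrightarrow> Suc j # q \<in> C"
      proof
        assume "Suc j # q \<in> sh ` Ct C"
        then obtain r where "Suc j # q = sh r" "r \<in> Ct C" by (rule imageE)
        then show "Suc j # q \<in> C" by (cases r) simp_all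
      next
        assume "Suc j # q \<in> C"
        then have "j # q \<in> Ct C" by simp
        then show "Suc j # q \<in> sh ` Ct C" by (metis image_eqI sh_Cons)
      qed
      then show ?thesis using Cons Suc by (auto simp: phi_def)
    qed
  qed
  then show ?thesis by blast
qed

lemma sh_in_image: "[] \<notin> B \<Longrightarrow> Suc i # p \<in> sh ` B \<longleftrightarrow> i # p \<in> B"
proof
  assume "[] \<notin> B" "Suc i # p \<in> sh ` B"
  then obtain r where "Suc i # p = sh r" "r \<in> B" by (blast elim: imageE)
  with \<open>[] \<notin> B\<close> show "i # p \<in> B" by (cases r) simp_all
next
  assume "i # p \<in> B"
  then show "Suc i # p \<in> sh ` B" by (metis image_eqI sh_Cons)
qed

lemma zero_notin_sh: "0 # p \<notin> sh ` B"
  by (auto simp: sh_def)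

lemma C0_phi: "C0 (phi (A, B)) = A"
  by (auto simp: C0_def phi_def zero_notin_sh)

lemma Ct_phi: "[] \<notin> B \<Longrightarrow> Ct (phi (A, B)) = B"
proof -
  assume B: "[] \<notin> B"
  have "q \<in> Ct (phi (A, B)) \<longleftrightarrow> q \<in> B" for q
  proof (cases q)
    case Nil then show ?thesis using B by simp
  next
    case (Cons i p)
    then show ?thesis using B by (auto simp: phi_def sh_in_image)
  qed
  then show ?thesis by blast
qed

lemma pos_Cons_cases:
  "p \<in> pos (LNode (t # ts)) \<longleftrightarrow> p = [] \<or> (\<exists>q. p = 0 # q \<and> q \<in> pos t) \<or> (\<exists>i q. p = Suc i # q \<and> i # q \<in> pos (LNode ts))"
  by (cases p; cases "hd p") (auto simp: pos_def)

lemma C0_AC: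
  assumes "C \<in> AC (LNode (t # ts))"
  shows "C0 C \<in> insert {[]} (AC t)"
proof (cases "[0] \<in> C")
  case True
  have "C0 C = {[]}"
  proof
    show "{[]} \<subseteq> C0 C" using True by simp
    show "C0 C \<subseteq> {[]}"
    proof
      fix p assume "p \<in> C0 C"
      then have "0 # p \<in> C" by simp
      have ac: "antichain C" using assms by (simp add: AC_def)
      then have "(\<exists>r. 0 # p = [0] @ r) \<longrightarrow> [0] = 0 # p"
        using True \<open>0 # p \<in> C\<close> unfolding antichain_def by blast
      then have "[0] = 0 # p" by simp
      then show "p \<in> {[]}" by simp
    qed
  qed
  then show ?thesis by simp
next
  case False
  have "C0 C \<subseteq> pos t - {[]}"
  proof
    fix p assume "p \<in> C0 C"
    then have "0 # p \<in> C" by simp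
    then have "0 # p \<in> pos (LNode (t # ts))" using assms by (auto simp: AC_def)
    then have "p \<in> pos t" by (simp add: pos_def)
    moreover have "p \<noteq> []" using False \<open>0 # p \<in> C\<close> by auto
    ultimately show "p \<in> pos t - {[]}" by simp
  qed
  moreover have "antichain (C0 C)"
    unfolding antichain_def
  proof (intro ballI impI)
    fix p q assume "p \<in> C0 C" "q \<in> C0 C" "\<exists>r. q = p @ r"
    then obtain r where r: "q = p @ r" by blast
    have ac: "antichain C" using assms by (simp add: AC_def)
    have "0 # q = (0 # p) @ r" using r by simp
    moreover have "0 # p \<in> C" "0 # q \<in> C" using \<open>p \<in> C0 C\<close> \<open>q \<in> C0 C\<close> by simp_all
    ultimately have "0 # p = 0 # q" using ac unfolding antichain_def by blast
    then show "p = q" by simp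
  qed
  ultimately show ?thesis by (simp add: AC_def)
qed

lemma Ct_AC:
  assumes "C \<in> AC (LNode (t # ts))"
  shows "Ct C \<in> AC (LNode ts)"
proof -
  have "Ct C \<subseteq> pos (LNode ts) - {[]}"
  proof
    fix q assume q: "q \<in> Ct C"
    then obtain i p where ip: "q = i # p" "Suc i # p \<in> C" by (auto simp: Ct_def)
    then have "Suc i # p \<in> pos (LNode (t # ts))" using assms by (auto simp: AC_def)
    then show "q \<in> pos (LNode ts) - {[]}" using ip by (simp add: pos_def)
  qed
  moreover have "antichain (Ct C)"
    unfolding antichain_def
  proof (intro ballI impI)
    fix p q assume "p \<in> Ct C" "q \<in> Ct C" "\<exists>r. q = p @ r"
    then obtain i p' j q' r where "p = i # p'" "q = j # q'" "Suc i # p' \<in> C" "Suc j # q' \<in> C" "q = p @ r"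
      by (auto simp: Ct_def)
    then have "Suc j # q' = (Suc i # p') @ r" by simp
    with \<open>Suc i # p' \<in> C\<close> \<open>Suc j # q' \<in> C\<close> assms have "Suc i # p' = Suc j # q'"
      unfolding AC_def antichain_def by blast
    then show "p = q" using \<open>p = i # p'\<close> \<open>q = j # q'\<close> by simp
  qed
  ultimately show ?thesis by (simp add: AC_def)
qed

lemma phi_AC:
  assumes A: "A \<in> insert {[]} (AC t)" and B: "B \<in> AC (LNode ts)"
  shows "phi (A, B) \<in> AC (LNode (t # ts))"
proof -
  have BN: "[] \<notin> B" using B by (auto simp: AC_def)
  have sub: "phi (A, B) \<subseteq> pos (LNode (t # ts)) - {[]}"
  proof
    fix p assume "p \<in> phi (A, B)"
    then consider (a) q where "q \<in> A" "p = 0 # q" | (b) q where "q \<in> B" "p = sh q"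
      by (auto simp: phi_def)
    then show "p \<in> pos (LNode (t # ts)) - {[]}"
    proof cases
      case a
      then have "q \<in> pos t" using A by (auto simp: AC_def)
      then show ?thesis using a by (simp add: pos_def)
    next
      case b
      then obtain i r where "q = i # r" using BN by (cases q) auto
      then have "i # r \<in> pos (LNode ts)" using b B by (auto simp: AC_def)
      then show ?thesis using b \<open>q = i # r\<close> by (simp add: pos_def)
    qed
  qed
  have acA: "antichain A"
  proof (cases "A = {[]}")
    case True then show ?thesis by (simp add: antichain_def)
  next
    case False with A show ?thesis by (simp add: AC_def)
  qed
  have acB: "antichain B" using B by (auto simp: AC_def)
  have "antichain (phi (A, B))"
    unfolding antichain_def
  proof (intro ballI impI)
    fix p q assume p: "p \<in> phi (A, B)" and q: "q \<in> phi (A, B)" and "\<exists>r. q = p @ r"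
    then obtain r where r: "q = p @ r" by blast
    from p consider (a) p' where "p' \<in> A" "p = 0 # p'" | (b) p' where "p' \<in> B" "p = sh p'"
      by (auto simp: phi_def)
    then show "p = q"
    proof cases
      case a
      from q consider (a2) q' where "q' \<in> A" "q = 0 # q'" | (b2) q' where "q' \<in> B" "q = sh q'"
        by (auto simp: phi_def)
      then show ?thesis
      proof cases
        case a2
        then have "q' = p' @ r" using a r by simp
        then have "p' = q'" using acA a a2 unfolding antichain_def by blast
        then show ?thesis using a a2 by simp
      next
        case b2
        then show ?thesis using a r by (simp add: sh_def)
      qed
    next
      case b
      then obtain i p'' where pi: "p' = i # p''" using BN by (cases p') auto
      from q consider (a2) q' where "q' \<in> A" "q = 0 # q'" | (b2) q' where "q' \<in> B" "q = sh q'"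
        by (auto simp: phi_def)
      then show ?thesis
      proof cases
        case a2
        then show ?thesis using b r pi by simp
      next
        case b2
        then obtain j q'' where qj: "q' = j # q''" using BN by (cases q') auto
        then have "j # q'' = (i # p'') @ r" using b2 b r pi by simp
        then have "p' = q'" using acB b b2 pi qj unfolding antichain_def by blast
        then show ?thesis using b b2 by simp
      qed
    qed
  qed
  with sub show ?thesis by (simp add: AC_def)
qed

lemma phi_bij: "bij_betw phi (insert {[]} (AC t) \<times> AC (LNode ts)) (AC (LNode (t # ts)))"
proof (rule bij_betw_byWitness[where f' = "\<lambda>C. (C0 C, Ct C)"])
  show "\<forall>a\<in>insert {[]} (AC t) \<times> AC (LNode ts). (C0 (phi a), Ct (phi a)) = a"
    by (auto simp: C0_phi Ct_phi Nil_notin_AC)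
  show "\<forall>a'\<in>AC (LNode (t # ts)). phi (C0 a', Ct a') = a'"
    using phi_decomp Nil_notin_AC by metis
  show "phi ` (insert {[]} (AC t) \<times> AC (LNode ts)) \<subseteq> AC (LNode (t # ts))"
    using phi_AC by auto
  show "(\<lambda>C. (C0 C, Ct C)) ` AC (LNode (t # ts)) \<subseteq> insert {[]} (AC t) \<times> AC (LNode ts)"
    using C0_AC Ct_AC by auto
qed

lemma inj_on_sh: "[] \<notin> B \<Longrightarrow> inj_on sh B"
  unfolding inj_on_def sh_def by (metis list.collapse list.inject nat.inject)

lemma PC_phi:
  assumes "finite A" "finite B" "[] \<notin> B"
  shows "PC (phi (A, B)) (LNode (t # ts)) = PC A t + PC B (LNode ts)"
proof -
  have ms: "mset_set (phi (A, B)) = image_mset (Cons 0) (mset_set A) + image_mset sh (mset_set B)"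
  proof -
    have "mset_set (phi (A, B)) = mset_set (Cons 0 ` A) + mset_set (sh ` B)"
      unfolding phi_def fst_conv snd_conv
      by (rule mset_set_Union) (use assms zero_notin_sh in auto)
    also have "\<dots> = image_mset (Cons 0) (mset_set A) + image_mset sh (mset_set B)"
      using assms inj_on_sh by (simp add: image_mset_mset_set)
    finally show ?thesis .
  qed
  have "image_mset (\<lambda>p. iso (sub (LNode (t # ts)) p)) (image_mset sh (mset_set B))
      = image_mset (\<lambda>p. iso (sub (LNode ts) p)) (mset_set B)"
    unfolding multiset.map_comp o_def
  proof (rule image_mset_cong)
    fix q assume "q \<in># mset_set B"
    then have "q \<in> B" using assms by simp
    then obtain i r where "q = i # r" using assms by (cases q) auto
    then show "iso (sub (LNode (t # ts)) (sh q)) = iso (sub (LNode ts) q)" by simp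
  qed
  then show ?thesis
    by (simp add: PC_def ms multiset.map_comp o_def)
qed

lemma prune_LNode_children: "prune C (LNode ts) = LNode (children (prune C (LNode ts)))"
  by simp

lemma prune_Cons:
  "children (prune C (LNode (t # ts))) =
     (if [0] \<in> C then [] else [prune (C0 C) t]) @ children (prune (Ct C) (LNode ts))"
proof -
  have z: "zip [0..<length (t # ts)] (t # ts) = (0, t) # map (\<lambda>(x, y). (Suc x, y)) (zip [0..<length ts] ts)"
    by (simp add: upt_conv_Cons map_Suc_upt[symmetric] zip_map1 del: upt_Suc)
  have m: "map (\<lambda>x. (\<lambda>(i, t). if [i] \<in> C then [] else [prune {p. i # p \<in> C} t]) ((\<lambda>(x, y). (Suc x, y)) x)) (zip [0..<length ts] ts)
     = map (\<lambda>(i, t). if [i] \<in> Ct C then [] else [prune {p. i # p \<in> Ct C} t]) (zip [0..<length ts] ts)"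
    by (rule map_cong) auto
  show ?thesis
    unfolding prune.simps children.simps z list.map(2) concat.simps map_map o_def m
    by (simp add: C0_def)
qed

lemma prune_empty: "prune {} l = l"
proof (induction l)
  case (LNode ts)
  then show ?case
  proof (induction ts)
    case Nil then show ?case by simp
  next
    case (Cons t ts)
    have e: "C0 {} = {}" "Ct {} = {}" by (auto simp: C0_def Ct_def)
    have "children (prune {} (LNode (t # ts))) = t # ts"
      using Cons by (subst prune_Cons) (simp add: e)
    then show ?case by (metis children.simps prune_LNode_children)
  qed
qed

definition Q :: "ltree \<Rightarrow> H2" where
  "Q l = (\<Sum>C\<in>AC l. Poly_Mapping.single (PC C l, mset (map iso (children (prune C l)))) 1)"

lemma AC_Nil: "AC (LNode []) = {{}}"
  by (auto simp: AC_def pos_LNode antichain_def)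

lemma Q_Nil: "Q (LNode []) = 1"
  by (simp add: Q_def AC_Nil PC_def one_H2 Poly_Mapping.mult_single)

lemma idBp_sum: "idBp (sum f A) = (\<Sum>a\<in>A. idBp (f a))"
  by (simp add: idBp_def lin_sum)

lemma iso_prune: "iso (prune C l) = Node (mset (map iso (children (prune C l))))"
  by (cases l) simp

lemma Q_Cons: "Q (LNode (t # ts)) = (Poly_Mapping.single ({#iso t#}, {#}) 1 + idBp (Q t)) * Q (LNode ts)"
proof -
  define g where "g C = Poly_Mapping.single (PC C (LNode (t # ts)), mset (map iso (children (prune C (LNode (t # ts)))))) (1::rat)" for C
  define a where "a A = Poly_Mapping.single (PC A t, mset (map iso (if [] \<in> A then [] else [prune A t]))) (1::rat)" for A
  define b where "b B = Poly_Mapping.single (PC B (LNode ts), mset (map iso (children (prune B (LNode ts))))) (1::rat)" for B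
  have Q1: "Q (LNode (t # ts)) = sum g (AC (LNode (t # ts)))"
    by (simp add: Q_def g_def)
  also have "\<dots> = sum (\<lambda>x. g (phi x)) (insert {[]} (AC t) \<times> AC (LNode ts))"
    by (rule sum.reindex_bij_betw[OF phi_bij, symmetric])
  also have "\<dots> = (\<Sum>(A, B)\<in>insert {[]} (AC t) \<times> AC (LNode ts). a A * b B)"
  proof (rule sum.cong)
    fix AB assume AB: "AB \<in> insert {[]} (AC t) \<times> AC (LNode ts)"
    obtain A B where AB': "AB = (A, B)" by fastforce
    have finA: "finite A" using AB AB' finite_AC_elem by auto
    have finB: "finite B" "[] \<notin> B" using AB AB' finite_AC_elem Nil_notin_AC by auto
    have z: "[0] \<in> phi (A, B) \<longleftrightarrow> [] \<in> A"
      by (auto simp: phi_def sh_def)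
    have "g (phi (A, B)) = a A * b B"
      unfolding g_def a_def b_def
      by (subst prune_Cons) (simp add: PC_phi finA finB z C0_phi Ct_phi Poly_Mapping.mult_single del: prune.simps)
    then show "g (phi AB) = (case AB of (A, B) \<Rightarrow> a A * b B)" by (simp add: AB')
  qed simp
  also have "\<dots> = sum a (insert {[]} (AC t)) * sum b (AC (LNode ts))"
    by (simp add: sum_product sum.cartesian_product)
  also have "sum b (AC (LNode ts)) = Q (LNode ts)"
    by (simp add: Q_def b_def)
  also have "sum a (insert {[]} (AC t)) = Poly_Mapping.single ({#iso t#}, {#}) 1 + idBp (Q t)"
  proof -
    have nin: "{[]} \<notin> AC t" using Nil_notin_AC by blast
    have "a {[]} = Poly_Mapping.single ({#iso t#}, {#}) 1"
      by (simp add: a_def PC_def)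
    moreover have "sum a (AC t) = idBp (Q t)"
      unfolding Q_def idBp_sum
    proof (rule sum.cong)
      fix A assume "A \<in> AC t"
      then have "[] \<notin> A" by (rule Nil_notin_AC)
      then show "a A = idBp (Poly_Mapping.single (PC A t, mset (map iso (children (prune A t)))) 1)"
        using iso_prune[of A t] by (simp add: a_def)
    qed simp
    ultimately show ?thesis
      by (simp add: sum.insert[OF finite_AC nin])
  qed
  finally show ?thesis .
qed

lemma Q_DF: "Q l = DF (mset (map iso (children l)))"
proof (induction l)
  case (LNode ts)
  then show ?case
  proof (induction ts)
    case Nil then show ?case by (simp add: Q_Nil)
  next
    case (Cons t ts)
    obtain cs where t: "t = LNode cs" by (cases t)
    have "Q t = DF (mset (map iso cs))" using Cons.prems t by simp
    then have "Dt (iso t) = Poly_Mapping.single ({#iso t#}, {#}) 1 + idBp (Q t)"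
      by (simp add: t Dt_Node)
    then show ?case
      using Cons by (simp add: Q_Cons DF_add_mset mult.commute)
  qed
qed


definition conv2 :: "H2 \<Rightarrow> T" where
  "conv2 = lin (\<lambda>k. Poly_Mapping.single [fst k, snd k] 1)"

lemma tens_lin: "tens x y = lin (\<lambda>u. lin (\<lambda>v. Poly_Mapping.single (u @ v) 1) y) x"
  by (simp add: tens_def lin_def smul_sum)
lemma tmult_lin: "tmult x y = lin (\<lambda>u. lin (\<lambda>v. Poly_Mapping.single (map2 (+) u v) 1) y) x"
  by (simp add: tmult_def lin_def smul_sum)
lemma embed_lin: "embed x = lin (\<lambda>F. Poly_Mapping.single [F] 1) x"
  by (simp add: embed_def lin_def)
lemma cop_lin: "cop x = lin cop_forest x"
  by (simp add: cop_def lin_def)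
lemma apply_first_lin: "apply_first g w = lin (\<lambda>L. tens (g (Poly_Mapping.single (hd L) 1)) (Poly_Mapping.single (tl L) 1)) w"
  by (simp add: apply_first_def lin_def)
lemma Fmap_lin: "Fmap i w = lin (\<lambda>L. if length L = i then itop (map (\<lambda>F. Poly_Mapping.single F 1) L) else 0) w"
  unfolding Fmap_def lin_def by (rule sum.cong) auto

lemma tens_lin1: "tens (lin f x) y = lin (\<lambda>k. tens (f k) y) x"
  by (simp add: tens_lin lin_lin)
lemma tens_lin2: "tens x (lin f y) = lin (\<lambda>k. tens x (f k)) y"
  by (simp add: tens_lin lin_lin) (rule lin_swap)
lemma tmult_lin1: "tmult (lin f x) y = lin (\<lambda>k. tmult (f k) y) x"
  by (simp add: tmult_lin lin_lin)
lemma tmult_lin2: "tmult x (lin f y) = lin (\<lambda>k. tmult x (f k)) y"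
  by (simp add: tmult_lin lin_lin) (rule lin_swap)

lemma tens_single [simp]: "tens (Poly_Mapping.single u c) (Poly_Mapping.single v d) = Poly_Mapping.single (u @ v) (c * d)"
  by (simp add: tens_lin)
lemma tmult_single [simp]: "tmult (Poly_Mapping.single u c) (Poly_Mapping.single v d) = Poly_Mapping.single (map2 (+) u v) (c * d)"
  by (simp add: tmult_lin)
lemma embed_single [simp]: "embed (Poly_Mapping.single F c) = Poly_Mapping.single [F] c"
  by (simp add: embed_lin)
lemma conv2_single [simp]: "conv2 (Poly_Mapping.single (A, B) c) = Poly_Mapping.single [A, B] c"
  by (simp add: conv2_def)

lemma conv2_lin: "conv2 (lin f x) = lin (\<lambda>k. conv2 (f k)) x"
  by (simp add: conv2_def lin_lin)
lemma embed_lin': "embed (lin f x) = lin (\<lambda>k. embed (f k)) x"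
  by (simp add: embed_lin lin_lin)

lemma lin_mult_left: "(lin f x :: 'a::comm_monoid_add \<Rightarrow>\<^sub>0 rat) * y = lin (\<lambda>k. f k * y) x"
  by (induction x rule: lin_induct1) (auto simp: lin_add lin_smul distrib_right smul_pull_left)
lemma lin_mult_right: "y * (lin f x :: 'a::comm_monoid_add \<Rightarrow>\<^sub>0 rat) = lin (\<lambda>k. y * f k) x"
  by (induction x rule: lin_induct1) (auto simp: lin_add lin_smul distrib_left smul_pull_right)

lemma conv2_tensor2: "conv2 (tensor2 x y) = tens (embed x) (embed y)"
  by (simp add: tensor2_def conv2_lin embed_lin tens_lin1 tens_lin2 lin_lin) (rule lin_swap)

lemma conv2_mult: "tmult (conv2 X) (conv2 Y) = conv2 (X * Y)"
proof -
  have "X * Y = lin (\<lambda>k. Poly_Mapping.single k 1) X * Y" by simp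
  also have "\<dots> = lin (\<lambda>k. Poly_Mapping.single k 1 * Y) X" by (rule lin_mult_left)
  also have "\<dots> = lin (\<lambda>k. lin (\<lambda>m. Poly_Mapping.single (k + m) 1) Y) X"
  proof (rule lin_cong)
    fix k
    have "Poly_Mapping.single k 1 * Y = Poly_Mapping.single k 1 * lin (\<lambda>m. Poly_Mapping.single m 1) Y" by simp
    also have "\<dots> = lin (\<lambda>m. Poly_Mapping.single k 1 * Poly_Mapping.single m 1) Y" by (rule lin_mult_right)
    finally show "Poly_Mapping.single k 1 * Y = lin (\<lambda>m. Poly_Mapping.single (k + m) 1) Y"
      by (simp add: Poly_Mapping.mult_single)
  qed
  finally have "X * Y = lin (\<lambda>k. lin (\<lambda>m. Poly_Mapping.single (k + m) 1) Y) X" .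
  then show ?thesis
    by (simp add: conv2_def tmult_lin1 tmult_lin2 lin_lin) (rule lin_swap)
qed

lemma conv2_zero [simp]: "conv2 0 = 0"
  by (simp add: conv2_def)
lemma conv2_sum: "conv2 (sum f A) = (\<Sum>a\<in>A. conv2 (f a))"
  by (simp add: conv2_def lin_sum)
lemma conv2_add: "conv2 (x + y) = conv2 x + conv2 y"
  by (simp add: conv2_def lin_add)
lemma conv2_diff: "conv2 (x - y) = conv2 x - conv2 y"
  by (simp add: conv2_def lin_diff)

lemma finite_adm_cuts: "finite (adm_cuts l)"
  using finite_AC by (simp add: adm_cuts_AC)

lemma cop_tree_conv2: "cop_tree t = conv2 (Dt t)"
proof -
  define l where "l = rep t"
  obtain cs where l: "l = LNode cs" by (cases l)
  have tl: "t = iso l" by (simp add: l_def)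
  have ACins: "AC l = insert {} (adm_cuts l)" and nin: "{} \<notin> adm_cuts l"
    by (auto simp: adm_cuts_AC)
  have "(\<Sum>C\<in>AC l. Poly_Mapping.single [PC C l, {#RC C l#}] (1::rat)) = conv2 (idBp (Q l))"
    unfolding Q_def idBp_sum conv2_sum
    by (rule sum.cong) (simp_all add: RC_def iso_prune[of _ l])
  moreover have "(\<Sum>C\<in>AC l. Poly_Mapping.single [PC C l, {#RC C l#}] (1::rat)) =
      Poly_Mapping.single [{#}, {#t#}] 1 + (\<Sum>C\<in>adm_cuts l. Poly_Mapping.single [PC C l, {#RC C l#}] 1)"
    unfolding ACins by (subst sum.insert[OF finite_adm_cuts nin]) (simp add: PC_def RC_def prune_empty tl)
  ultimately have "cop_tree t = Poly_Mapping.single [{#t#}, {#}] 1 + conv2 (idBp (Q l))"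
    by (simp add: cop_tree_def l_def[symmetric] add_ac)
  also have "\<dots> = conv2 (Dt t)"
    by (simp add: Q_DF l tl Dt_Node conv2_add)
  finally show ?thesis .
qed

lemma conv2_one: "conv2 1 = Poly_Mapping.single [{#}, {#}] 1"
  by (simp add: one_H2)

lemma cop_forest_conv2: "cop_forest F = conv2 (DF F)"
proof -
  define xs where "xs = (SOME xs. mset xs = F)"
  have xs: "mset xs = F" unfolding xs_def by (rule someI_ex) (rule ex_mset)
  have "foldr (\<lambda>t acc. tmult (cop_tree t) acc) ys (Poly_Mapping.single [{#}, {#}] 1) = conv2 (prod_list (map Dt ys))" for ys
    by (induction ys) (simp_all add: conv2_one[symmetric] cop_tree_conv2 conv2_mult)
  then have "cop_forest F = conv2 (prod_list (map Dt xs))"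
    by (simp add: cop_forest_def xs_def)
  also have "prod_list (map Dt xs) = DF F"
    by (metis DF_def mset_map prod_mset_prod_list xs)
  finally show ?thesis .
qed

lemma cop_conv2: "cop x = conv2 (Dh x)"
proof -
  have "cop_forest = (\<lambda>F. conv2 (DF F))" by (rule ext) (rule cop_forest_conv2)
  then show ?thesis by (simp add: cop_lin Dh_def conv2_lin)
qed

lemma unitH_one: "unitH = 1"
  by (simp add: unitH_def)

lemma rcop_conv2: "rcop x = conv2 (Dh x - tensor2 1 x - tensor2 x 1)"
  by (simp add: rcop_def cop_conv2 conv2_diff conv2_tensor2 unitH_one)

lemma lookup_conv2: "Poly_Mapping.lookup (conv2 Y) [a, b] = Poly_Mapping.lookup Y (a, b)"
proof (induction Y rule: lin_induct)
  case zero then show ?case by (simp add: conv2_def)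
next
  case (add x y) then show ?case by (simp add: conv2_add lookup_add)
next
  case (single k c)
  obtain A B where "k = (A, B)" by fastforce
  then show ?case by (auto simp: lookup_single when_def)
qed

lemma conv2_inj: "conv2 Y = 0 \<Longrightarrow> Y = 0"
proof (rule poly_mapping_eqI)
  fix k :: "forest \<times> forest" assume "conv2 Y = 0"
  obtain a b where "k = (a, b)" by fastforce
  then show "Poly_Mapping.lookup Y k = Poly_Mapping.lookup 0 k"
    using lookup_conv2[of Y a b] \<open>conv2 Y = 0\<close> by simp
qed

lemma Prim_iff: "p \<in> Prim \<longleftrightarrow> Dh p = tensor2 p 1 + tensor2 1 p"
proof
  assume "p \<in> Prim"
  then have "conv2 (Dh p - tensor2 1 p - tensor2 p 1) = 0" by (simp add: Prim_def rcop_conv2)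
  then have "Dh p - tensor2 1 p - tensor2 p 1 = 0" by (rule conv2_inj)
  then show "Dh p = tensor2 p 1 + tensor2 1 p" by (simp add: algebra_simps)
next
  assume "Dh p = tensor2 p 1 + tensor2 1 p"
  then show "p \<in> Prim" by (simp add: Prim_def rcop_conv2)
qed

lemma lookup_tensor2: "Poly_Mapping.lookup (tensor2 x y) (a, b) = Poly_Mapping.lookup x a * Poly_Mapping.lookup y b"
proof (induction x rule: lin_induct)
  case zero then show ?case by simp
next
  case (add u v) then show ?case by (simp add: tensor2_add1 lookup_add algebra_simps)
next
  case (single k c)
  show ?case
  proof (induction y rule: lin_induct)
    case zero then show ?case by simp
  next
    case (add u v) then show ?case by (simp add: tensor2_add2 lookup_add algebra_simps)
  next
    case (single l d) then show ?case by (auto simp: lookup_single when_def)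
  qed
qed

lemma lookup_DF_empty: "Poly_Mapping.lookup (DF N) ({#}, {#}) = (if N = {#} then 1 else 0)"
proof (cases "N = {#}")
  case True then show ?thesis by (simp add: one_H2)
next
  case False
  have "({#}, {#}) \<notin> Poly_Mapping.keys (DF N)"
    using graded_DF[of N] False by (auto simp: graded_def wF_zero_iff)
  then show ?thesis using False by (simp add: in_keys_iff)
qed

lemma lookup_Dh_empty: "Poly_Mapping.lookup (Dh p) ({#}, {#}) = Poly_Mapping.lookup p {#}"
proof (induction p rule: lin_induct)
  case zero then show ?case by (simp add: Dh_def)
next
  case (add u v) then show ?case by (simp add: Dh_add lookup_add)
next
  case (single k c) then show ?case by (auto simp: lookup_DF_empty lookup_single when_def)
qed

lemma eps_Prim: "p \<in> Prim \<Longrightarrow> eps p = 0"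
proof -
  assume "p \<in> Prim"
  then have "Dh p = tensor2 p 1 + tensor2 1 p" by (simp add: Prim_iff)
  then have "Poly_Mapping.lookup (Dh p) ({#}, {#}) = Poly_Mapping.lookup (tensor2 p 1 + tensor2 1 p) ({#}, {#})" by simp
  then have "Poly_Mapping.lookup p {#} = 2 * Poly_Mapping.lookup p {#}"
    by (simp add: lookup_Dh_empty lookup_add lookup_tensor2 flip: single_one)
  then show "eps p = 0" by (simp add: eps_def)
qed

definition apply_last :: "(H \<Rightarrow> H) \<Rightarrow> T \<Rightarrow> T" where
  "apply_last G w = lin (\<lambda>L. tens (Poly_Mapping.single (butlast L) 1) (embed (G (Poly_Mapping.single (last L) 1)))) w"

lemma apply_last_conv2: "apply_last G (conv2 Y) = conv2 (lin (\<lambda>k. tensor2 (Poly_Mapping.single (fst k) 1) (G (Poly_Mapping.single (snd k) 1))) Y)"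
  by (simp add: apply_last_def conv2_def lin_lin conv2_tensor2[unfolded conv2_def])

lemma topH_expand: "topH x p = lin (\<lambda>M. topH (Poly_Mapping.single M 1) p) x"
  by (simp add: topH_def)

lemma topH_one: "topH 1 p = p - Poly_Mapping.single {#} (Poly_Mapping.lookup p {#})"
proof -
  have "topH 1 p = lin (\<lambda>N. topA {#} N) p"
    by (simp add: topH_def lin_one)
  also have "\<dots> = p - Poly_Mapping.single {#} (Poly_Mapping.lookup p {#})"
  proof (induction p rule: lin_induct)
    case zero then show ?case by simp
  next
    case (add u v) then show ?case by (simp add: lin_add lookup_add single_add)
  next
    case (single k c)
    show ?case
    proof (cases "k = {#}")
      case True then show ?thesis by (simp add: topA_def)
    next
      case False
      then have "wF k \<noteq> 0" by (simp add: wF_zero_iff)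
      then show ?thesis using False by (simp add: topA_def gf_empty_left lookup_single)
    qed
  qed
  finally show ?thesis .
qed

lemma IdG_diff: "IdG p (a - b) = IdG p a - IdG p b"
  by (simp add: IdG_def lin_diff)

lemma IdG_single [simp]: "IdG p (Poly_Mapping.single (A, B) c) = smul c (tensor2 (Poly_Mapping.single A 1) (topH (Poly_Mapping.single B 1) p))"
  by (simp add: IdG_def)

lemma IdG_tensor2_1: "IdG p (tensor2 1 x) = tensor2 1 (topH x p)"
  by (subst tensor2_one1) (simp add: IdG_lin topH_expand[of x] tensor2_lin2)

lemma IdG_tensor2_2: "IdG p (tensor2 x 1) = tensor2 x (topH 1 p)"
proof -
  have "IdG p (tensor2 x 1) = lin (\<lambda>N. tensor2 (Poly_Mapping.single N 1) (topH 1 p)) x"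
    by (subst tensor2_one2) (simp add: IdG_lin)
  also have "\<dots> = tensor2 x (topH 1 p)"
    by (simp add: tensor2_lin1[symmetric])
  finally show ?thesis .
qed

lemma rcop_top:
  assumes "p \<in> Prim"
  shows "rcop (top x p) = tens (embed x) (embed p) + apply_last (\<lambda>z. top z p) (rcop x)"
proof -
  have prim: "Dh p = tensor2 p 1 + tensor2 1 p" using assms by (simp add: Prim_iff)
  have e: "eps p = 0" using assms by (rule eps_Prim)
  have G: "(\<lambda>z. top z p) = (\<lambda>z. topH z p)" by (simp add: top_topH)
  have one: "topH 1 p = p" using e by (simp add: topH_one eps_def)
  have "rcop (top x p) = conv2 (IdG p (Dh x) - tensor2 1 (topH x p))"
    by (simp add: rcop_conv2 top_topH Dh_topH[OF prim])
  moreover have "apply_last (\<lambda>z. top z p) (rcop x) = conv2 (IdG p (Dh x) - tensor2 1 (topH x p) - tensor2 x p)"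
    unfolding G rcop_conv2 apply_last_conv2
    by (simp add: IdG_def[symmetric] IdG_diff IdG_tensor2_1 IdG_tensor2_2 one)
  ultimately show ?thesis
    by (simp add: conv2_diff conv2_tensor2)
qed


definition linmap :: "(('a \<Rightarrow>\<^sub>0 rat) \<Rightarrow> ('b \<Rightarrow>\<^sub>0 rat)) \<Rightarrow> bool" where
  "linmap g \<longleftrightarrow> (\<forall>x y. g (x + y) = g x + g y) \<and> (\<forall>c x. g (smul c x) = smul c (g x))"

lemma linmap_lin: "linmap (lin f)"
  by (simp add: linmap_def lin_add lin_smul)

lemma linmap_add: "linmap g \<Longrightarrow> g (x + y) = g x + g y"
  by (simp add: linmap_def)
lemma linmap_smul: "linmap g \<Longrightarrow> g (smul c x) = smul c (g x)"
  by (simp add: linmap_def)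
lemma linmap_zero: "linmap g \<Longrightarrow> g 0 = 0"
  using linmap_smul[of g 0 0] by simp
lemma linmap_sum: "linmap g \<Longrightarrow> g (sum f A) = (\<Sum>a\<in>A. g (f a))"
  by (induction A rule: infinite_finite_induct) (auto simp: linmap_zero linmap_add)
lemma linmap_diff: "linmap g \<Longrightarrow> g (x - y) = g x - g y"
  by (metis add_diff_cancel diff_add_cancel linmap_add)
lemma linmap_lin_app: "linmap g \<Longrightarrow> g (lin f x) = lin (\<lambda>k. g (f k)) x"
  by (induction x rule: lin_induct1) (auto simp: linmap_zero linmap_add linmap_smul lin_add lin_smul)
lemma linmap_expand: "linmap g \<Longrightarrow> g x = lin (\<lambda>k. g (Poly_Mapping.single k 1)) x"
  using linmap_lin_app[of g "\<lambda>k. Poly_Mapping.single k 1" x] by simp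
lemma linmap_comp: "linmap g \<Longrightarrow> linmap h \<Longrightarrow> linmap (\<lambda>x. g (h x))"
  by (simp add: linmap_def)

lemma linmap_rcop: "linmap rcop"
  unfolding linmap_def
proof (intro conjI allI)
  fix x y :: H
  have "Dh (x + y) - tensor2 1 (x + y) - tensor2 (x + y) 1 = (Dh x - tensor2 1 x - tensor2 x 1) + (Dh y - tensor2 1 y - tensor2 y 1)"
    by (simp add: Dh_add tensor2_add1 tensor2_add2)
  then show "rcop (x + y) = rcop x + rcop y"
    by (simp add: rcop_conv2 conv2_add)
next
  fix c and x :: H
  have "Dh (smul c x) - tensor2 1 (smul c x) - tensor2 (smul c x) 1 = smul c (Dh x - tensor2 1 x - tensor2 x 1)"
    by (simp add: Dh_smul tensor2_smul1 tensor2_smul2 smul_diff)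
  then show "rcop (smul c x) = smul c (rcop x)"
    by (simp add: rcop_conv2 conv2_def lin_smul)
qed

lemma linmap_rcop0: "linmap (rcop_it 0)"
  unfolding linmap_def
  by (simp add: eta_def eps_def embed_lin lin_add lin_smul lin_diff lookup_add single_add smul_add smul_diff algebra_simps)

lemma linmap_apply_first: "linmap (apply_first g)"
proof -
  have "apply_first g = lin (\<lambda>L. tens (g (Poly_Mapping.single (hd L) 1)) (Poly_Mapping.single (tl L) 1))"
    by (rule ext) (simp add: apply_first_lin)
  then show ?thesis by (simp add: linmap_lin)
qed

lemma linmap_apply_last: "linmap (apply_last G)"
proof -
  have "apply_last G = lin (\<lambda>L. tens (Poly_Mapping.single (butlast L) 1) (embed (G (Poly_Mapping.single (last L) 1))))"
    by (rule ext) (simp add: apply_last_def)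
  then show ?thesis by (simp add: linmap_lin)
qed

lemma linmap_rcop_it: "linmap (rcop_it k)"
proof (induction k)
  case 0 then show ?case by (rule linmap_rcop0)
next
  case (Suc k)
  show ?case
  proof (cases k)
    case 0 then show ?thesis using linmap_rcop by simp
  next
    case (Suc k')
    have "rcop_it (Suc k) = (\<lambda>x. apply_first (rcop_it k) (rcop x))"
      using Suc by (simp add: fun_eq_iff)
    then show ?thesis using linmap_comp[OF linmap_apply_first linmap_rcop] by simp
  qed
qed

lemma linmap_Fmap: "linmap (Fmap i)"
proof -
  have "Fmap i = lin (\<lambda>L. if length L = i then itop (map (\<lambda>F. Poly_Mapping.single F 1) L) else 0)"
    by (rule ext) (simp add: Fmap_lin)
  then show ?thesis by (simp add: linmap_lin)
qed

lemma linmap_eps: "eps (x + y) = eps x + eps y" "eps (smul c x) = c * eps x"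
  by (simp_all add: eps_def lookup_add)

lemma apply_first_tens:
  assumes "linmap g"
  shows "apply_first g (tens (embed x) (embed q)) = tens (g x) (embed q)"
proof -
  have "apply_first g (tens (embed x) (embed q)) = lin (\<lambda>a. tens (g (Poly_Mapping.single a 1)) (embed q)) x"
    by (simp add: embed_lin tens_lin1 tens_lin2 lin_lin apply_first_lin) (rule lin_swap[symmetric])
  also have "\<dots> = tens (g x) (embed q)"
    by (subst linmap_expand[OF assms, of x]) (simp add: tens_lin1)
  finally show ?thesis .
qed

lemma apply_first_tens1:
  assumes "linmap g"
  shows "apply_first g (tens (Poly_Mapping.single [A] 1) (embed q)) = tens (g (Poly_Mapping.single A 1)) (embed q)"
  using apply_first_tens[OF assms, of "Poly_Mapping.single A 1" q] by simp

lemma apply_last_tens: "apply_last G (tens w (Poly_Mapping.single [B] 1)) = tens w (embed (G (Poly_Mapping.single B 1)))"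
proof -
  have "tens w (Poly_Mapping.single [B] 1) = lin (\<lambda>u. Poly_Mapping.single (u @ [B]) 1) w"
    by (simp add: tens_lin)
  then have "apply_last G (tens w (Poly_Mapping.single [B] 1)) = lin (\<lambda>u. apply_last G (Poly_Mapping.single (u @ [B]) 1)) w"
    by (simp add: linmap_lin_app[OF linmap_apply_last])
  also have "\<dots> = lin (\<lambda>u. tens (Poly_Mapping.single u 1) (embed (G (Poly_Mapping.single B 1)))) w"
    by (simp add: apply_last_def)
  also have "\<dots> = tens w (embed (G (Poly_Mapping.single B 1)))"
    by (simp add: tens_lin1[symmetric])
  finally show ?thesis .
qed

lemma apply_first_last:
  assumes "linmap g"
  shows "apply_first g (apply_last G (conv2 Y)) = apply_last G (apply_first g (conv2 Y))"
proof -
  have "apply_first g (apply_last G (conv2 Y)) =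
      lin (\<lambda>k. tens (g (Poly_Mapping.single (fst k) 1)) (embed (G (Poly_Mapping.single (snd k) 1)))) Y"
    by (simp add: apply_last_conv2 conv2_lin linmap_lin_app[OF linmap_apply_first] conv2_tensor2 apply_first_tens1[OF assms])
  also have "\<dots> = apply_last G (apply_first g (conv2 Y))"
    by (simp add: conv2_def apply_first_lin lin_lin linmap_lin_app[OF linmap_apply_last] apply_last_tens)
  finally show ?thesis .
qed

lemma eta_zero [simp]: "eta 0 = 0"
  by (simp add: eta_def)

lemma rcop_ex: "\<exists>Y. rcop x = conv2 Y"
  using rcop_conv2 by blast

lemma rcop_it_top:
  assumes "p \<in> Prim" "eps x = 0"
  shows "rcop_it (Suc k) (top x p) = tens (rcop_it k x) (embed p) + apply_last (\<lambda>z. top z p) (rcop_it (Suc k) x)"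
proof (cases k)
  case 0 then show ?thesis using assms by (simp add: rcop_top)
next
  case (Suc k')
  obtain Y where Y: "rcop x = conv2 Y" using rcop_ex by blast
  have R: "linmap (rcop_it (Suc k'))" by (rule linmap_rcop_it)
  have "rcop_it (Suc k) (top x p) = apply_first (rcop_it (Suc k')) (rcop (top x p))"
    using Suc by simp
  also have "\<dots> = apply_first (rcop_it (Suc k')) (tens (embed x) (embed p))
      + apply_first (rcop_it (Suc k')) (apply_last (\<lambda>z. top z p) (rcop x))"
    by (simp add: rcop_top[OF assms(1)] linmap_add[OF linmap_apply_first])
  also have "\<dots> = tens (rcop_it k x) (embed p) + apply_last (\<lambda>z. top z p) (rcop_it (Suc k) x)"
    using Suc by (simp add: apply_first_tens[OF R] Y apply_first_last[OF R])
  finally show ?thesis .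
qed

lemma itop_snoc: "qs \<noteq> [] \<Longrightarrow> itop (qs @ [p]) = top (itop qs) p"
  by (cases qs) simp_all

lemma lookup_topb_empty: "Poly_Mapping.lookup (topb M N) {#} = 0"
proof (cases "N = {#}")
  case True then show ?thesis by (simp add: topb_def)
next
  case False
  let ?xs = "flist N"
  let ?S = "{(j, p). j < length ?xs \<and> p \<in> pos (rep (?xs ! j))}"
  have "Poly_Mapping.lookup (\<Sum>(j, p)\<in>?S. Poly_Mapping.single
            (mset (?xs[j := iso (graft (map rep (flist M)) (rep (?xs ! j)) p)])) (1::rat)) {#} = 0"
    unfolding lookup_sum
  proof (rule sum.neutral, safe)
    fix j p assume "j < length ?xs"
    then have "?xs[j := iso (graft (map rep (flist M)) (rep (?xs ! j)) p)] \<noteq> []" by auto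
    then have "mset (?xs[j := iso (graft (map rep (flist M)) (rep (?xs ! j)) p)]) \<noteq> {#}" by simp
    then show "Poly_Mapping.lookup (Poly_Mapping.single (mset (?xs[j := iso (graft (map rep (flist M)) (rep (?xs ! j)) p)])) (1::rat)) {#} = 0"
      by (simp add: lookup_single when_def)
  qed
  then show ?thesis using False by (simp add: topb_def)
qed

lemma eps_top: "eps (top x y) = 0"
  by (simp add: eps_def top_def lookup_sum lookup_topb_empty)

lemma eps_itop: "ps \<noteq> [] \<Longrightarrow> set ps \<subseteq> Prim \<Longrightarrow> eps (itop ps) = 0"
proof (induction ps rule: rev_induct)
  case Nil then show ?case by simp
next
  case (snoc p qs)
  show ?case
  proof (cases "qs = []")
    case True then show ?thesis using snoc by (simp add: eps_Prim)
  next
    case False then show ?thesis by (simp add: itop_snoc eps_top)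
  qed
qed

lemma tens_assoc: "tens (tens x y) z = tens x (tens y z)"
  by (simp add: tens_lin lin_lin)

lemma tens_Nil_right: "tens x (Poly_Mapping.single [] 1) = x"
  by (simp add: tens_lin)
lemma tens_Nil_left: "tens (Poly_Mapping.single [] 1) x = x"
  by (simp add: tens_lin)

lemma tensor_list_snoc: "tensor_list (qs @ [p]) = tens (tensor_list qs) (embed p)"
  by (induction qs) (simp_all add: tens_Nil_right tens_Nil_left tens_assoc)

definition lenT :: "nat \<Rightarrow> T \<Rightarrow> bool" where
  "lenT n w \<longleftrightarrow> (\<forall>L\<in>Poly_Mapping.keys w. length L = n)"

lemma lenT_tens: "lenT a x \<Longrightarrow> lenT b y \<Longrightarrow> lenT (a + b) (tens x y)"
  unfolding lenT_def
proof
  fix L assume x: "\<forall>L\<in>Poly_Mapping.keys x. length L = a" and y: "\<forall>L\<in>Poly_Mapping.keys y. length L = b"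
    and L: "L \<in> Poly_Mapping.keys (tens x y)"
  have "L \<in> (\<Union>u\<in>Poly_Mapping.keys x. Poly_Mapping.keys (lin (\<lambda>v. Poly_Mapping.single (u @ v) (1::rat)) y))"
    using L keys_lin[of "\<lambda>u. lin (\<lambda>v. Poly_Mapping.single (u @ v) 1) y" x] unfolding tens_lin by blast
  then obtain u where u: "u \<in> Poly_Mapping.keys x" "L \<in> Poly_Mapping.keys (lin (\<lambda>v. Poly_Mapping.single (u @ v) (1::rat)) y)"
    by blast
  then have "L \<in> (\<Union>v\<in>Poly_Mapping.keys y. Poly_Mapping.keys (Poly_Mapping.single (u @ v) (1::rat)))"
    using keys_lin[of "\<lambda>v. Poly_Mapping.single (u @ v) 1" y] by blast
  then obtain v where "v \<in> Poly_Mapping.keys y" "L = u @ v" by auto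
  then show "length L = a + b" using u x y by auto
qed

lemma lenT_embed: "lenT 1 (embed x)"
proof -
  have "Poly_Mapping.keys (embed x) \<subseteq> (\<Union>F\<in>Poly_Mapping.keys x. Poly_Mapping.keys (Poly_Mapping.single [F] (1::rat)))"
    unfolding embed_lin by (rule keys_lin)
  then show ?thesis unfolding lenT_def by auto
qed

lemma lenT_tensor_list: "lenT (length ps) (tensor_list ps)"
proof (induction ps)
  case Nil then show ?case by (simp add: lenT_def)
next
  case (Cons p ps)
  then show ?case using lenT_tens[OF lenT_embed Cons] by simp
qed

lemma topH_lin1: "topH (lin f x) y = lin (\<lambda>k. topH (f k) y) x"
  by (simp add: topH_def lin_lin)
lemma topH_lin2: "topH x (lin f y) = lin (\<lambda>k. topH x (f k)) y"
  by (simp add: topH_def lin_lin lin_swap[of _ _ x])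

lemma Fmap_tens_embed:
  assumes "lenT n w" "n \<ge> 1"
  shows "Fmap (Suc n) (tens w (embed p)) = top (Fmap n w) p"
proof -
  have "Fmap (Suc n) (tens w (embed p)) = lin (\<lambda>u. Fmap (Suc n) (tens (Poly_Mapping.single u 1) (embed p))) w"
    by (subst (1) lin_id[symmetric, of w]) (simp only: tens_lin1 linmap_lin_app[OF linmap_Fmap])
  also have "\<dots> = lin (\<lambda>u. top (itop (map (\<lambda>F. Poly_Mapping.single F 1) u)) p) w"
  proof (rule lin_cong)
    fix u assume "u \<in> Poly_Mapping.keys w"
    then have lu: "length u = n" using assms by (simp add: lenT_def)
    then have un: "u \<noteq> []" using assms by auto
    have "Fmap (Suc n) (tens (Poly_Mapping.single u 1) (embed p)) = lin (\<lambda>F. Fmap (Suc n) (Poly_Mapping.single (u @ [F]) 1)) p"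
      by (simp add: embed_lin tens_lin2 linmap_lin_app[OF linmap_Fmap])
    also have "\<dots> = lin (\<lambda>F. top (itop (map (\<lambda>F. Poly_Mapping.single F 1) u)) (Poly_Mapping.single F 1)) p"
      using lu un by (simp add: Fmap_lin itop_snoc)
    also have "\<dots> = top (itop (map (\<lambda>F. Poly_Mapping.single F 1) u)) p"
      by (simp add: top_topH topH_lin2[symmetric])
    finally show "Fmap (Suc n) (tens (Poly_Mapping.single u 1) (embed p)) = top (itop (map (\<lambda>F. Poly_Mapping.single F 1) u)) p" .
  qed
  also have "\<dots> = top (lin (\<lambda>u. itop (map (\<lambda>F. Poly_Mapping.single F 1) u)) w) p"
    by (simp add: top_topH topH_lin1)
  also have "lin (\<lambda>u. itop (map (\<lambda>F. Poly_Mapping.single F 1) u)) w = Fmap n w"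
    unfolding Fmap_lin using assms(1) by (intro lin_cong) (simp add: lenT_def)
  finally show ?thesis .
qed

lemma Fmap_tensor_list: "ps \<noteq> [] \<Longrightarrow> Fmap (length ps) (tensor_list ps) = itop ps"
proof (induction ps rule: rev_induct)
  case Nil then show ?case by simp
next
  case (snoc p qs)
  show ?case
  proof (cases "qs = []")
    case True
    have "Fmap 1 (embed p) = p"
      by (simp add: embed_lin Fmap_lin lin_lin)
    then show ?thesis using True by (simp add: tens_Nil_right)
  next
    case False
    then have "length qs \<ge> 1" by (cases qs) auto
    then show ?thesis
      using snoc False by (simp add: tensor_list_snoc Fmap_tens_embed lenT_tensor_list itop_snoc)
  qed
qed

lemma main_list:
  assumes "ps \<noteq> []" "set ps \<subseteq> Prim"
  shows "rcop_it (length ps - 1) (itop ps) = tensor_list ps \<and> (\<forall>k\<ge>length ps. rcop_it k (itop ps) = 0)"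
  using assms
proof (induction ps rule: rev_induct)
  case Nil then show ?case by simp
next
  case (snoc p qs)
  have p: "p \<in> Prim" using snoc by simp
  show ?case
  proof (cases "qs = []")
    case True
    have e: "eps p = 0" using p by (rule eps_Prim)
    have "rcop_it 0 p = tensor_list [p]"
      using e by (simp add: tens_Nil_right)
    moreover have "rcop_it k p = 0" if "k \<ge> 1" for k
    proof (cases k)
      case 0 then show ?thesis using that by simp
    next
      case (Suc k')
      have r: "rcop p = 0" using p by (simp add: Prim_def)
      show ?thesis
      proof (cases k')
        case 0 then show ?thesis using Suc r by simp
      next
        case (Suc k'') then show ?thesis using \<open>k = Suc k'\<close> r
          by (simp add: linmap_zero[OF linmap_apply_first])
      qed
    qed
    ultimately show ?thesis using True by simp
  next
    case False
    define x where "x = itop qs"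
    define n where "n = length qs"
    have n1: "n \<ge> 1" using False by (cases qs) (auto simp: n_def)
    have IH: "rcop_it (n - 1) x = tensor_list qs" "\<And>k. k \<ge> n \<Longrightarrow> rcop_it k x = 0"
      using snoc False by (auto simp: x_def n_def)
    have ex: "eps x = 0" using eps_itop[OF False] snoc by (simp add: x_def)
    have it: "itop (qs @ [p]) = top x p" using False by (simp add: itop_snoc x_def)
    have AL: "apply_last G 0 = 0" for G by (simp add: apply_last_def)
    have "rcop_it n (top x p) = tensor_list (qs @ [p])"
    proof -
      have "rcop_it n (top x p) = rcop_it (Suc (n - 1)) (top x p)" using n1 by simp
      also have "\<dots> = tens (rcop_it (n - 1) x) (embed p) + apply_last (\<lambda>z. top z p) (rcop_it (Suc (n - 1)) x)"
        by (rule rcop_it_top[OF p ex])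
      also have "\<dots> = tens (tensor_list qs) (embed p)"
        using n1 IH by (simp add: AL)
      finally show ?thesis by (simp add: tensor_list_snoc)
    qed
    moreover have "rcop_it k (top x p) = 0" if kn: "k \<ge> Suc n" for k
    proof -
      obtain k' where k': "k = Suc k'" "k' \<ge> n" using kn by (cases k) auto
      have "rcop_it k (top x p) = tens (rcop_it k' x) (embed p) + apply_last (\<lambda>z. top z p) (rcop_it (Suc k') x)"
        unfolding k' by (rule rcop_it_top[OF p ex])
      also have "\<dots> = 0" using IH k' by (simp add: AL tens_lin)
      finally show ?thesis .
    qed
    ultimately show ?thesis using it by (simp add: n_def)
  qed
qed

lemma primT_ex:
  assumes "w \<in> primT i"
  shows "\<exists>(n::nat) c v. w = (\<Sum>j<n. smul (c j) (v j)) \<and> (\<forall>j<n. \<exists>ps. v j = tensor_list ps \<and> length ps = i \<and> set ps \<subseteq> Prim)"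
  using assms unfolding primT_def qspan_def by simp

lemma claim1:
  assumes "i \<ge> 1" "w \<in> primT i"
  shows "rcop_it (i - 1) (Fmap i w) = w"
proof -
  obtain n c v where w: "w = (\<Sum>j<(n::nat). smul (c j) (v j))"
    and v: "\<forall>j<n. \<exists>ps. v j = tensor_list ps \<and> length ps = i \<and> set ps \<subseteq> Prim"
    using primT_ex[OF assms(2)] by blast
  have L: "linmap (\<lambda>x. rcop_it (i - 1) (Fmap i x))" by (rule linmap_comp[OF linmap_rcop_it linmap_Fmap])
  have "rcop_it (i - 1) (Fmap i (v j)) = v j" if jn: "j < n" for j
  proof -
    obtain ps where ps: "v j = tensor_list ps" "length ps = i" "set ps \<subseteq> Prim" using v jn by blast
    then have "ps \<noteq> []" using assms by auto
    then show ?thesis using ps main_list[of ps] Fmap_tensor_list[of ps] by simp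
  qed
  then show ?thesis
    unfolding w linmap_sum[OF L] linmap_smul[OF L] by simp
qed

lemma claim2:
  assumes "i \<ge> 1" "w \<in> primT i" "k > i - 1"
  shows "rcop_it k (Fmap i w) = 0"
proof -
  obtain n c v where w: "w = (\<Sum>j<(n::nat). smul (c j) (v j))"
    and v: "\<forall>j<n. \<exists>ps. v j = tensor_list ps \<and> length ps = i \<and> set ps \<subseteq> Prim"
    using primT_ex[OF assms(2)] by blast
  have L: "linmap (\<lambda>x. rcop_it k (Fmap i x))" by (rule linmap_comp[OF linmap_rcop_it linmap_Fmap])
  have "rcop_it k (Fmap i (v j)) = 0" if jn: "j < n" for j
  proof -
    obtain ps where ps: "v j = tensor_list ps" "length ps = i" "set ps \<subseteq> Prim" using v jn by blast
    then have "ps \<noteq> []" using assms by auto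
    moreover have "k \<ge> length ps" using ps assms by auto
    ultimately show ?thesis using ps main_list[of ps] Fmap_tensor_list[of ps] by simp
  qed
  then show ?thesis
    unfolding w linmap_sum[OF L] linmap_smul[OF L] by simp
qed

lemma eps_sum: "eps (sum f A) = (\<Sum>a\<in>A. eps (f a))"
  by (simp add: eps_def lookup_sum)

lemma eps_Fmap:
  assumes "i \<ge> 1" "w \<in> primT i"
  shows "eps (Fmap i w) = 0"
proof -
  obtain n c v where w: "w = (\<Sum>j<(n::nat). smul (c j) (v j))"
    and v: "\<forall>j<n. \<exists>ps. v j = tensor_list ps \<and> length ps = i \<and> set ps \<subseteq> Prim"
    using primT_ex[OF assms(2)] by blast
  have "eps (Fmap i (v j)) = 0" if jn: "j < n" for j
  proof -
    obtain ps where ps: "v j = tensor_list ps" "length ps = i" "set ps \<subseteq> Prim" using v jn by blast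
    then have "ps \<noteq> []" using assms by auto
    then show ?thesis using ps eps_itop[of ps] Fmap_tensor_list[of ps] by simp
  qed
  then show ?thesis
    unfolding w linmap_sum[OF linmap_Fmap] linmap_smul[OF linmap_Fmap] eps_sum
    by (simp add: linmap_eps)
qed

theorem lemma4p4:
  fixes i :: nat
  assumes "i \<ge> 1"
  shows "(\<forall>w\<in>primT i. rcop_it (i - 1) (Fmap i w) = w)
    \<and> (\<forall>k. k > i - 1 \<longrightarrow> (\<forall>w\<in>primT i. rcop_it k (Fmap i w) = 0))
    \<and> inj_on (Fmap i) (primT i)
    \<and> (\<forall>(n::nat) (c::rat) (w::nat \<Rightarrow> T).
          (\<forall>j\<in>{1..n}. w j \<in> primT j) \<and> eta c + (\<Sum>j=1..n. Fmap j (w j)) = 0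
          \<longrightarrow> c = 0 \<and> (\<forall>j\<in>{1..n}. Fmap j (w j) = 0))"
proof (intro conjI)
  show "\<forall>w\<in>primT i. rcop_it (i - 1) (Fmap i w) = w" using claim1 assms by blast
next
  show "\<forall>k. k > i - 1 \<longrightarrow> (\<forall>w\<in>primT i. rcop_it k (Fmap i w) = 0)" using claim2 assms by blast
next
  show "inj_on (Fmap i) (primT i)"
  proof (rule inj_onI)
    fix x y assume "x \<in> primT i" "y \<in> primT i" "Fmap i x = Fmap i y"
    then show "x = y" using claim1[OF assms] by metis
  qed
next
  show "\<forall>(n::nat) (c::rat) (w::nat \<Rightarrow> T).
          (\<forall>j\<in>{1..n}. w j \<in> primT j) \<and> eta c + (\<Sum>j=1..n. Fmap j (w j)) = 0
          \<longrightarrow> c = 0 \<and> (\<forall>j\<in>{1..n}. Fmap j (w j) = 0)"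
  proof (intro allI impI)
  fix n c and w :: "nat \<Rightarrow> T"
  assume H: "(\<forall>j\<in>{1..n}. w j \<in> primT j) \<and> eta c + (\<Sum>j=1..n. Fmap j (w j)) = 0"
  then have W: "\<And>j. j \<in> {1..n} \<Longrightarrow> w j \<in> primT j" and S: "eta c + (\<Sum>j=1..n. Fmap j (w j)) = 0" by auto
  have "eps (\<Sum>j=1..n. Fmap j (w j)) = 0"
    unfolding eps_sum by (rule sum.neutral) (use W eps_Fmap in auto)
  moreover have "eps (eta c + (\<Sum>j=1..n. Fmap j (w j))) = 0" using S by (simp add: eps_def)
  ultimately have c0: "c = 0" by (simp add: eta_def eps_def lookup_add)
  have "\<forall>j\<in>{1..m}. Fmap j (w j) = 0" if "m \<le> n" "(\<Sum>j=1..m. Fmap j (w j)) = 0" for m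
    using that
  proof (induction m)
    case 0 then show ?case by simp
  next
    case (Suc m)
    have Wm: "\<And>j. j \<in> {1..Suc m} \<Longrightarrow> w j \<in> primT j" using W Suc.prems by auto
    have sum_eq: "(\<Sum>j=1..Suc m. Fmap j (w j)) = (\<Sum>j=1..m. Fmap j (w j)) + Fmap (Suc m) (w (Suc m))"
      by simp
    have "rcop_it m (\<Sum>j=1..m. Fmap j (w j)) = 0"
      unfolding linmap_sum[OF linmap_rcop_it]
      by (rule sum.neutral) (use Wm claim2 in auto)
    moreover have "rcop_it m (Fmap (Suc m) (w (Suc m))) = w (Suc m)"
      using claim1[of "Suc m" "w (Suc m)"] Wm by simp
    moreover have "rcop_it m (\<Sum>j=1..Suc m. Fmap j (w j)) = 0"
      using Suc.prems linmap_zero[OF linmap_rcop_it] by simp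
    ultimately have "w (Suc m) = 0"
      unfolding sum_eq linmap_add[OF linmap_rcop_it] by simp
    then have F0: "Fmap (Suc m) (w (Suc m)) = 0" by (simp add: linmap_zero[OF linmap_Fmap])
    then have "(\<Sum>j=1..m. Fmap j (w j)) = 0" using Suc.prems sum_eq by simp
    then have "\<forall>j\<in>{1..m}. Fmap j (w j) = 0" using Suc by simp
    then show ?case using F0 by (auto simp: le_Suc_eq)
  qed
  moreover have "(\<Sum>j=1..n. Fmap j (w j)) = 0" using S c0 by simp
  ultimately show "c = 0 \<and> (\<forall>j\<in>{1..n}. Fmap j (w j) = 0)" using c0 by blast
  qed
qed


end
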